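(* Let $n\ge 1$, $N=2^n$, and let $(\omega,\gamma)$ be a 4-round key-schedule that is good (in the sense defined in the context) with parameters $\delta_1,\delta_2,\delta_3$. Consider the 4-round cipher $\mathsf{KAFw}^{F,(\omega,\gamma)}$ built on a uniformly random function $F:\{0,1\}^n\to\{0,1\}^n$. Then for all non-negative integers $q_f,q_e$, $$\mathbf{Adv}^{\oplus\text{-rka}}_{\mathsf{KAFw}^{F,(\omega,\gamma)}}(q_f,q_e)\le 2\delta_1 q_e q_f+(\delta_2+\delta_3)q_e^2+\frac{2q_eq_f+7q_e^2}{N}.$$
   Context: Let $n\ge1$ and $N=2^n$; identify $\{0,1\}^n$ with $\mathbb{F}_2^n$ and write $X\|Y$ for concatenation. A $t$-round key-schedule $(\omega,\gamma)$ consists of maps $\omega=(\omega_0,\omega_1,\omega_2,\omega_3)$ and $\gamma=(\gamma_1,\dots,\gamma_t)$, each from $\{0,1\}^n$ to $\{0,1\}^n$. For $f:\{0,1\}^n\to\{0,1\}^n$ and $\kappa\in\{0,1\}^n$ let $\Psi^f_\kappa(W_L\|W_R)=W_R\|(W_L\oplus f(\kappa\oplus W_R))$. The $t$-round cipher with key $k\in\{0,1\}^n$ is $\mathsf{KAFw}^{f,(\omega,\gamma)}_k(W)=(\omega_2(k)\|\omega_3(k))\oplus\Psi^f_{\gamma_t(k)}\circ\cdots\circ\Psi^f_{\gamma_1(k)}\big((\omega_0(k)\|\omega_1(k))\oplus W\big)$ (the same $f$ in every round). A 4-round key-schedule is good with parameters $\delta_1,\delta_2,\delta_3$ if, with $\varphi_1(k)=\omega_1(k)\oplus\gamma_1(k)$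 and $\varphi_4(k)=\omega_2(k)\oplus\gamma_4(k)$: (i) for $i\in\{1,4\}$, for all $\Delta,y$, $\Pr_{k}[\varphi_i(k\oplus\Delta)=y]\le\delta_1$, and for all $\Delta\ne\Delta'$ and all $y$, $\Pr_k[\varphi_i(k\oplus\Delta)\oplus\varphi_i(k\oplus\Delta')=y]\le\delta_2$; (ii) for all $\Delta,\Delta',y$, $\Pr_k[\varphi_1(k\oplus\Delta)\oplus\varphi_4(k\oplus\Delta')=y]\le\delta_3$; $k$ uniform in $\{0,1\}^n$. Related-key security: for a blockcipher $E$ with $n$-bit keys and $2n$-bit blocks and a key $k$, the oracle $\mathsf{RK}[E_k]$ maps $(\Delta,LR)\mapsto E_{k\oplus\Delta}(LR)$ and its inverse maps $(\Delta,ST)\mapsto E^{-1}_{k\oplus\Delta}(ST)$. A computationally unbounded distinguisher gets two-sided access to the related-key oracle and (forward) access to $F$. Real world: $k$ uniform, $F$ uniform, oracles $(\mathsf{RK}[\mathsf{KAFw}^{F,(\omega,\gamma)}_k],F)$. Ideal world: $(\mathsf{RK}[\mathsf{IC}_k],F)$ with $\mathsf{IC}$ a uniformly random blockcipher ($2n$-bit blocks, $n$-bit keys) independent of $F$, $k$ uniform. The advantage is the absolute difference of the probabilities of outputting 1, and $\mathbf{Adv}^{\oplus\text{-rka}}(q_f,q_e)$ is its maximum over distinguishers making $q_f$ queries to $F$ and $q_e$ related-key queries in total. *)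

theory Defs
  imports "HOL-Library.Word" "HOL-Probability.Probability_Mass_Function"
begin

text \<open>n-bit strings are modelled as \<open>'n word\<close> (with \<open>n = LENGTH('n) \<ge> 1\<close>),
  2n-bit blocks \<open>W_L || W_R\<close> as pairs of n-bit words; \<open>\<oplus>\<close> is bitwise xor.\<close>

definition xor2 :: "'n::len word \<times> 'n word \<Rightarrow> 'n word \<times> 'n word \<Rightarrow> 'n word \<times> 'n word" where
  "xor2 A B = (xor (fst A) (fst B), xor (snd A) (snd B))"

definition Psi :: "('n::len word \<Rightarrow> 'n word) \<Rightarrow> 'n word \<Rightarrow> 'n word \<times> 'n word \<Rightarrow> 'n word \<times> 'n word" where
  "Psi f \<kappa> W = (snd W, xor (fst W) (f (xor \<kappa> (snd W))))"

definition KAFw ::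
  "('n::len word \<Rightarrow> 'n word) \<Rightarrow> ('n word \<Rightarrow> 'n word) \<Rightarrow> ('n word \<Rightarrow> 'n word) \<Rightarrow>
   ('n word \<Rightarrow> 'n word) \<Rightarrow> ('n word \<Rightarrow> 'n word) \<Rightarrow> ('n word \<Rightarrow> 'n word) list \<Rightarrow>
   'n word \<Rightarrow> 'n word \<times> 'n word \<Rightarrow> 'n word \<times> 'n word" where
  "KAFw f w0 w1 w2 w3 gs k W =
     xor2 (w2 k, w3 k) (fold (\<lambda>g. Psi f (g k)) gs (xor2 (w0 k, w1 k) W))"

definition prk :: "('n::len word \<Rightarrow> bool) \<Rightarrow> real" where
  "prk P = real (card {k::'n word. P k}) / real (CARD('n word))"

definition good_ks ::
  "('n::len word \<Rightarrow> 'n word) \<Rightarrow> ('n word \<Rightarrow> 'n word) \<Rightarrow> ('n word \<Rightarrow> 'n word) \<Rightarrow>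
   ('n word \<Rightarrow> 'n word) \<Rightarrow> real \<Rightarrow> real \<Rightarrow> real \<Rightarrow> bool" where
  "good_ks w1 w2 g1 g4 \<delta>1 \<delta>2 \<delta>3 \<longleftrightarrow>
     (let \<phi>1 = (\<lambda>k. xor (w1 k) (g1 k)); \<phi>4 = (\<lambda>k. xor (w2 k) (g4 k)) in
      (\<forall>\<phi>\<in>{\<phi>1, \<phi>4}.
         (\<forall>\<Delta> y. prk (\<lambda>k. \<phi> (xor k \<Delta>) = y) \<le> \<delta>1) \<and>
         (\<forall>\<Delta> \<Delta>' y. \<Delta> \<noteq> \<Delta>' \<longrightarrow> prk (\<lambda>k. xor (\<phi> (xor k \<Delta>)) (\<phi> (xor k \<Delta>')) = y) \<le> \<delta>2)) \<and>
      (\<forall>\<Delta> \<Delta>' y. prk (\<lambda>k. xor (\<phi>1 (xor k \<Delta>)) (\<phi>4 (xor k \<Delta>')) = y) \<le> \<delta>3))"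

text \<open>Adaptive, possibly randomized, computationally unbounded distinguishers as
  interaction trees: output a bit, flip a fair coin, query \<open>F\<close>, or make a forward /
  inverse related-key query \<open>(\<Delta>, X)\<close>.\<close>
datatype ('a, 'b) dist =
    Out bool
  | Coin "bool \<Rightarrow> ('a, 'b) dist"
  | QF 'a "'a \<Rightarrow> ('a, 'b) dist"
  | QE 'a 'b "'b \<Rightarrow> ('a, 'b) dist"
  | QD 'a 'b "'b \<Rightarrow> ('a, 'b) dist"

primrec bounded :: "('a, 'b) dist \<Rightarrow> nat \<Rightarrow> nat \<Rightarrow> bool" where
  "bounded (Out b) qf qe = True"
| "bounded (Coin g) qf qe = (\<forall>c. bounded (g c) qf qe)"
| "bounded (QF x g) qf qe = (0 < qf \<and> (\<forall>y. bounded (g y) (qf - 1) qe))"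
| "bounded (QE d x g) qf qe = (0 < qe \<and> (\<forall>y. bounded (g y) qf (qe - 1)))"
| "bounded (QD d x g) qf qe = (0 < qe \<and> (\<forall>y. bounded (g y) qf (qe - 1)))"

primrec run :: "('a, 'b) dist \<Rightarrow> ('a \<Rightarrow> 'a) \<Rightarrow> ('a \<Rightarrow> 'b \<Rightarrow> 'b) \<Rightarrow> ('a \<Rightarrow> 'b \<Rightarrow> 'b) \<Rightarrow> bool pmf" where
  "run (Out b) F E D = return_pmf b"
| "run (Coin g) F E D = pmf_of_set UNIV \<bind> (\<lambda>c. run (g c) F E D)"
| "run (QF x g) F E D = run (g (F x)) F E D"
| "run (QE d x g) F E D = run (g (E d x)) F E D"
| "run (QD d x g) F E D = run (g (D d x)) F E D"

definition real_world ::
  "('n::len word \<Rightarrow> 'n word) \<Rightarrow> ('n word \<Rightarrow> 'n word) \<Rightarrow> ('n word \<Rightarrow> 'n word) \<Rightarrow>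
   ('n word \<Rightarrow> 'n word) \<Rightarrow> ('n word \<Rightarrow> 'n word) list \<Rightarrow>
   ('n word, 'n word \<times> 'n word) dist \<Rightarrow> bool pmf" where
  "real_world w0 w1 w2 w3 gs A =
     pmf_of_set (UNIV :: 'n word set) \<bind> (\<lambda>k.
     pmf_of_set (UNIV :: ('n word \<Rightarrow> 'n word) set) \<bind> (\<lambda>F.
       run A F (\<lambda>\<Delta>. KAFw F w0 w1 w2 w3 gs (xor k \<Delta>))
               (\<lambda>\<Delta>. inv (KAFw F w0 w1 w2 w3 gs (xor k \<Delta>)))))"

definition ideal_world ::
  "('n::len word, 'n word \<times> 'n word) dist \<Rightarrow> bool pmf" where
  "ideal_world A =
     pmf_of_set (UNIV :: 'n word set) \<bind> (\<lambda>k.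
     pmf_of_set {IC :: 'n word \<Rightarrow> 'n word \<times> 'n word \<Rightarrow> 'n word \<times> 'n word. \<forall>key. bij (IC key)} \<bind> (\<lambda>IC.
     pmf_of_set (UNIV :: ('n word \<Rightarrow> 'n word) set) \<bind> (\<lambda>F.
       run A F (\<lambda>\<Delta>. IC (xor k \<Delta>)) (\<lambda>\<Delta>. inv (IC (xor k \<Delta>))))))"

definition adv_rka ::
  "('n::len word \<Rightarrow> 'n word) \<Rightarrow> ('n word \<Rightarrow> 'n word) \<Rightarrow> ('n word \<Rightarrow> 'n word) \<Rightarrow>
   ('n word \<Rightarrow> 'n word) \<Rightarrow> ('n word \<Rightarrow> 'n word) list \<Rightarrow> nat \<Rightarrow> nat \<Rightarrow> real" where
  "adv_rka w0 w1 w2 w3 gs qf qe =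
     (SUP A \<in> {A :: ('n word, 'n word \<times> 'n word) dist. bounded A qf qe}.
        \<bar>pmf (real_world w0 w1 w2 w3 gs A) True - pmf (ideal_world A) True\<bar>)"

end

theory Submission
  imports Defs
begin


type_synonym 'n blk = "'n word \<times> 'n word"
type_synonym 'n trip = "'n word \<times> 'n blk \<times> 'n blk"
type_synonym 'n st = "('n word \<times> 'n word) set \<times> 'n trip set"

definition consO :: "('n::len word \<Rightarrow> 'n word) \<Rightarrow> ('n word \<Rightarrow> 'n blk \<Rightarrow> 'n blk) \<Rightarrow> 'n st \<Rightarrow> bool" where
  "consO F E s \<longleftrightarrow> (\<forall>p\<in>fst s. F (fst p) = snd p) \<and> (\<forall>t\<in>snd s. E (fst t) (fst (snd t)) = snd (snd t))"

definition addF :: "'n::len word \<Rightarrow> 'n word \<Rightarrow> 'n st \<Rightarrow> 'n st" where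
  "addF x y s = (insert (x,y) (fst s), snd s)"

definition addT :: "'n::len trip \<Rightarrow> 'n st \<Rightarrow> 'n st" where
  "addT t s = (fst s, insert t (snd s))"

primrec evl :: "('n::len st \<Rightarrow> bool \<Rightarrow> real) \<Rightarrow> ('n word, 'n blk) dist \<Rightarrow> 'n st \<Rightarrow>
   ('n word \<Rightarrow> 'n word) \<Rightarrow> ('n word \<Rightarrow> 'n blk \<Rightarrow> 'n blk) \<Rightarrow> ('n word \<Rightarrow> 'n blk \<Rightarrow> 'n blk) \<Rightarrow> real" where
  "evl h (Out b) s F E D = h s b"
| "evl h (Coin g) s F E D = (evl h (g True) s F E D + evl h (g False) s F E D) / 2"
| "evl h (QF x g) s F E D = evl h (g (F x)) (addF x (F x) s) F E D"
| "evl h (QE d X g) s F E D = evl h (g (E d X)) (addT (d, X, E d X) s) F E D"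
| "evl h (QD d Y g) s F E D = evl h (g (D d Y)) (addT (d, D d Y, Y) s) F E D"

lemma pmf_run_evl: "pmf (run A F E D) True = evl (\<lambda>s b. if b then 1 else 0) A s F E D"
proof (induction A arbitrary: s)
  case (Out b) then show ?case by (simp add: pmf_return indicator_def)
next
  case (Coin g)
  have "pmf (run (Coin g) F E D) True = (\<Sum>c\<in>UNIV. pmf (run (g c) F E D) True) / 2"
    by (simp add: pmf_bind integral_pmf_of_set)
  also have "\<dots> = (pmf (run (g True) F E D) True + pmf (run (g False) F E D) True) / 2"
    by (simp add: UNIV_bool)
  finally show ?case using Coin by simp
qed (simp_all)

lemma evl_one: "evl (\<lambda>s b. 1) A s F E D = 1"
  by (induction A arbitrary: s) simp_all

lemma evl_nonneg: "(\<And>s b. 0 \<le> h s b) \<Longrightarrow> 0 \<le> evl h A s F E D"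
  by (induction A arbitrary: s) simp_all

definition SS :: "'u set \<Rightarrow> ('u \<Rightarrow> 'n::len word \<Rightarrow> 'n word) \<Rightarrow> ('u \<Rightarrow> 'n word \<Rightarrow> 'n blk \<Rightarrow> 'n blk)
   \<Rightarrow> ('u \<Rightarrow> 'n word \<Rightarrow> 'n blk \<Rightarrow> 'n blk) \<Rightarrow> ('u \<Rightarrow> 'n st \<Rightarrow> bool \<Rightarrow> real) \<Rightarrow> ('n word, 'n blk) dist \<Rightarrow> 'n st \<Rightarrow> real" where
  "SS Om Fo Eo Do H A s = (\<Sum>u\<in>{u\<in>Om. consO (Fo u) (Eo u) s}. evl (H u) A s (Fo u) (Eo u) (Do u))"

lemma consO_addF: "consO F E (addF x y s) \<longleftrightarrow> consO F E s \<and> F x = y"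
  by (auto simp: consO_def addF_def)

lemma consO_addT: "consO F E (addT (d,X,Y) s) \<longleftrightarrow> consO F E s \<and> E d X = Y"
  by (auto simp: consO_def addT_def)

lemma SS_Out: "SS Om Fo Eo Do H (Out b) s = (\<Sum>u\<in>{u\<in>Om. consO (Fo u) (Eo u) s}. H u s b)"
  by (simp add: SS_def)

lemma SS_Coin: "SS Om Fo Eo Do H (Coin g) s = (SS Om Fo Eo Do H (g True) s + SS Om Fo Eo Do H (g False) s) / 2"
  unfolding SS_def evl.simps sum_divide_distrib[symmetric] sum.distrib ..

lemma SS_QF:
  assumes "finite Om"
  shows "SS Om Fo Eo Do H (QF x g) s = (\<Sum>y\<in>UNIV. SS Om Fo Eo Do H (g y) (addF x y s))"
proof -
  let ?S = "{u\<in>Om. consO (Fo u) (Eo u) s}"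
  have "SS Om Fo Eo Do H (QF x g) s = (\<Sum>u\<in>?S. evl (H u) (g (Fo u x)) (addF x (Fo u x) s) (Fo u) (Eo u) (Do u))"
    by (simp add: SS_def)
  also have "\<dots> = (\<Sum>y\<in>UNIV. \<Sum>u\<in>{u\<in>?S. Fo u x = y}. evl (H u) (g (Fo u x)) (addF x (Fo u x) s) (Fo u) (Eo u) (Do u))"
    by (rule sum.group[symmetric]) (use assms in auto)
  also have "\<dots> = (\<Sum>y\<in>UNIV. SS Om Fo Eo Do H (g y) (addF x y s))"
    unfolding SS_def
    by (intro sum.cong refl) (auto simp: consO_addF intro!: sum.cong)
  finally show ?thesis .
qed

lemma SS_QE:
  assumes "finite Om"
  shows "SS Om Fo Eo Do H (QE d X g) s = (\<Sum>Y\<in>UNIV. SS Om Fo Eo Do H (g Y) (addT (d,X,Y) s))"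
proof -
  let ?S = "{u\<in>Om. consO (Fo u) (Eo u) s}"
  have "SS Om Fo Eo Do H (QE d X g) s = (\<Sum>u\<in>?S. evl (H u) (g (Eo u d X)) (addT (d,X,Eo u d X) s) (Fo u) (Eo u) (Do u))"
    by (simp add: SS_def)
  also have "\<dots> = (\<Sum>Y\<in>UNIV. \<Sum>u\<in>{u\<in>?S. Eo u d X = Y}. evl (H u) (g (Eo u d X)) (addT (d,X,Eo u d X) s) (Fo u) (Eo u) (Do u))"
    by (rule sum.group[symmetric]) (use assms in auto)
  also have "\<dots> = (\<Sum>Y\<in>UNIV. SS Om Fo Eo Do H (g Y) (addT (d,X,Y) s))"
    unfolding SS_def
    by (intro sum.cong refl) (auto simp: consO_addT intro!: sum.cong)
  finally show ?thesis .
qed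

lemma SS_QD:
  assumes "finite Om" and bij: "\<And>u d. u \<in> Om \<Longrightarrow> bij (Eo u d) \<and> Do u d = inv (Eo u d)"
  shows "SS Om Fo Eo Do H (QD d Y g) s = (\<Sum>X\<in>UNIV. SS Om Fo Eo Do H (g X) (addT (d,X,Y) s))"
proof -
  let ?S = "{u\<in>Om. consO (Fo u) (Eo u) s}"
  have "SS Om Fo Eo Do H (QD d Y g) s = (\<Sum>u\<in>?S. evl (H u) (g (Do u d Y)) (addT (d,Do u d Y,Y) s) (Fo u) (Eo u) (Do u))"
    by (simp add: SS_def)
  also have "\<dots> = (\<Sum>X\<in>UNIV. \<Sum>u\<in>{u\<in>?S. Do u d Y = X}. evl (H u) (g (Do u d Y)) (addT (d,Do u d Y,Y) s) (Fo u) (Eo u) (Do u))"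
    by (rule sum.group[symmetric]) (use assms in auto)
  also have "\<dots> = (\<Sum>X\<in>UNIV. SS Om Fo Eo Do H (g X) (addT (d,X,Y) s))"
  proof -
    have e: "{u\<in>Om. consO (Fo u) (Eo u) (addT (d,X,Y) s)} = {u\<in>?S. Do u d Y = X}" for X
    proof -
      { fix u assume u: "u \<in> Om"
        then have b: "bij (Eo u d)" and dd: "Do u d = inv (Eo u d)" using bij by auto
        have "Do u d Y = X \<longleftrightarrow> Eo u d X = Y"
          using b unfolding dd by (metis bij_inv_eq_iff)
      }
      then show ?thesis by (auto simp: consO_addT)
    qed
    show ?thesis unfolding SS_def e by (intro sum.cong refl) auto
  qed
  finally show ?thesis .
qed


lemma sum_by_key:
  fixes S :: "'u set" and key :: "'u \<Rightarrow> 'k::finite"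
  assumes "finite S"
  shows "(\<Sum>u\<in>S. f (key u)) = (\<Sum>k\<in>UNIV. f k * real (card {u\<in>S. key u = k}))"
proof -
  have "(\<Sum>u\<in>S. f (key u)) = (\<Sum>k\<in>UNIV. \<Sum>u\<in>{u\<in>S. key u = k}. f (key u))"
    by (rule sum.group[symmetric]) (use assms in auto)
  also have "\<dots> = (\<Sum>k\<in>UNIV. f k * real (card {u\<in>S. key u = k}))"
    by (intro sum.cong refl) simp
  finally show ?thesis .
qed

lemma avg_ineq:
  fixes a1 a2 b1 b2 c1 c2 d1 d2 e x y :: real
  assumes "a1/x - b1/y \<le> e*(c1/x) + d1/x" "a2/x - b2/y \<le> e*(c2/x) + d2/x"
  shows "((a1+a2)/2)/x - ((b1+b2)/2)/y \<le> e*(((c1+c2)/2)/x) + ((d1+d2)/2)/x"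
proof -
  have "((a1+a2)/2)/x - ((b1+b2)/2)/y = ((a1/x - b1/y) + (a2/x - b2/y))/2"
    by (simp add: add_divide_distrib diff_divide_distrib)
  also have "\<dots> \<le> ((e*(c1/x) + d1/x) + (e*(c2/x) + d2/x))/2"
    by (rule divide_right_mono[OF add_mono[OF assms]]) simp
  also have "\<dots> = e*(((c1+c2)/2)/x) + ((d1+d2)/2)/x"
    by (simp add: add_divide_distrib algebra_simps)
  finally show ?thesis .
qed

lemma H_lemma:
  fixes OR :: "'r set" and OI :: "'i set"
    and FR :: "'r \<Rightarrow> 'n::len word \<Rightarrow> 'n word" and ER DR :: "'r \<Rightarrow> 'n word \<Rightarrow> 'n blk \<Rightarrow> 'n blk"
    and FI :: "'i \<Rightarrow> 'n::len word \<Rightarrow> 'n word" and EI DI :: "'i \<Rightarrow> 'n word \<Rightarrow> 'n blk \<Rightarrow> 'n blk"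
    and keyR :: "'r \<Rightarrow> 'n word" and keyI :: "'i \<Rightarrow> 'n word"
    and good :: "'n st \<Rightarrow> 'n word \<Rightarrow> bool" and eps :: real and qf qe :: nat
  assumes finR: "finite OR" and finI: "finite OI"
    and bijR: "\<And>u d. u \<in> OR \<Longrightarrow> bij (ER u d) \<and> DR u d = inv (ER u d)"
    and bijI: "\<And>u d. u \<in> OI \<Longrightarrow> bij (EI u d) \<and> DI u d = inv (EI u d)"
    and eps: "0 \<le> eps"
    and hyp: "\<And>s k. card (fst s) \<le> qf \<Longrightarrow> card (snd s) \<le> qe \<Longrightarrow> good s k \<Longrightarrow>
        (1 - eps) * real (card {u\<in>OI. consO (FI u) (EI u) s \<and> keyI u = k}) / real (card OI)
        \<le> real (card {u\<in>OR. consO (FR u) (ER u) s \<and> keyR u = k}) / real (card OR)"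
  shows "bounded A a b \<Longrightarrow> card (fst s) + a \<le> qf \<Longrightarrow> card (snd s) + b \<le> qe \<Longrightarrow>
    SS OI FI EI DI (\<lambda>u s b. if b then 1 else 0) A s / real (card OI)
    - SS OR FR ER DR (\<lambda>u s b. if b then 1 else 0) A s / real (card OR)
    \<le> eps * (SS OI FI EI DI (\<lambda>u s b. 1) A s / real (card OI))
      + SS OI FI EI DI (\<lambda>u s b. if good s (keyI u) then 0 else 1) A s / real (card OI)"
proof (induction A arbitrary: a b s)
  case (Out bb)
  let ?SI = "{u\<in>OI. consO (FI u) (EI u) s}"
  let ?SR = "{u\<in>OR. consO (FR u) (ER u) s}"
  define cI where "cI k = real (card {u\<in>?SI. keyI u = k})" for k
  define cR where "cR k = real (card {u\<in>?SR. keyR u = k})" for k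
  have fSI: "finite ?SI" and fSR: "finite ?SR" using finI finR by auto
  have adm: "card (fst s) \<le> qf" "card (snd s) \<le> qe" using Out by auto
  have per: "(if bb then 1 else 0) * cI k / real (card OI) - (if bb then 1 else 0) * cR k / real (card OR)
      \<le> eps * (cI k / real (card OI)) + (if good s k then 0 else 1) * cI k / real (card OI)" for k
  proof (cases bb)
    case True
    have cI0: "0 \<le> cI k" "0 \<le> cR k" by (auto simp: cI_def cR_def)
    show ?thesis
    proof (cases "good s k")
      case True
      have "(1 - eps) * cI k / real (card OI) \<le> cR k / real (card OR)"
      proof -
        have eqI: "{u\<in>?SI. keyI u = k} = {u\<in>OI. consO (FI u) (EI u) s \<and> keyI u = k}" by auto
        have eqR: "{u\<in>?SR. keyR u = k} = {u\<in>OR. consO (FR u) (ER u) s \<and> keyR u = k}" by auto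
        show ?thesis using hyp[OF adm True] unfolding cI_def cR_def eqI eqR by simp
      qed
      then show ?thesis using \<open>bb\<close> True by (simp add: algebra_simps diff_divide_distrib)
    next
      case False
      have "0 \<le> eps * (cI k / real (card OI))" using eps cI0 by simp
      moreover have "0 \<le> cR k / real (card OR)" using cI0 by simp
      ultimately show ?thesis using \<open>bb\<close> False cI0 by (simp only: if_True if_False)
    qed
  next
    case False
    have "0 \<le> eps * (cI k / real (card OI))" using eps by (simp add: cI_def)
    moreover have "0 \<le> (if good s k then 0 else 1) * cI k / real (card OI)" by (simp add: cI_def)
    ultimately show ?thesis using False by simp
  qed
  have e1: "SS OI FI EI DI (\<lambda>u s b. if b then 1 else 0) (Out bb) s = (\<Sum>k\<in>UNIV. (if bb then 1 else 0) * cI k)"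
    unfolding SS_Out cI_def using sum_by_key[OF fSI, of "\<lambda>_. if bb then 1 else 0" keyI] by simp
  have e2: "SS OR FR ER DR (\<lambda>u s b. if b then 1 else 0) (Out bb) s = (\<Sum>k\<in>UNIV. (if bb then 1 else 0) * cR k)"
    unfolding SS_Out cR_def using sum_by_key[OF fSR, of "\<lambda>_. if bb then 1 else 0" keyR] by simp
  have e3: "SS OI FI EI DI (\<lambda>u s b. 1) (Out bb) s = (\<Sum>k\<in>UNIV. cI k)"
    unfolding SS_Out cI_def using sum_by_key[OF fSI, of "\<lambda>_. 1" keyI] by simp
  have e4: "SS OI FI EI DI (\<lambda>u s b. if good s (keyI u) then 0 else 1) (Out bb) s
      = (\<Sum>k\<in>UNIV. (if good s k then 0 else 1) * cI k)"
    unfolding SS_Out cI_def using sum_by_key[OF fSI, of "\<lambda>k. if good s k then 0 else 1" keyI] by simp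
  have "(\<Sum>k\<in>UNIV. (if bb then 1 else 0) * cI k / real (card OI) - (if bb then 1 else 0) * cR k / real (card OR))
      \<le> (\<Sum>k\<in>UNIV. eps * (cI k / real (card OI)) + (if good s k then 0 else 1) * cI k / real (card OI))"
    by (rule sum_mono) (rule per)
  then show ?case unfolding e1 e2 e3 e4
    by (simp add: sum_subtractf sum.distrib sum_divide_distrib[symmetric] sum_distrib_left[symmetric])
next
  case (Coin g)
  have b: "bounded (g c) a b" for c using Coin.prems by simp
  note ih = Coin.IH[OF rangeI b Coin.prems(2,3)]
  show ?case unfolding SS_Coin by (rule avg_ineq[OF ih[of True] ih[of False]])
next
  case (QF x g)
  have a0: "0 < a" and bb: "\<And>y. bounded (g y) (a - 1) b" using QF.prems by auto
  have c1: "card (fst (addF x y s)) + (a - 1) \<le> qf" for y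
    using QF.prems(2) a0 card_insert_le_m1[of "card (fst s) + 1" "fst s" "(x,y)"]
    by (simp add: addF_def card_insert_if)
  have c2: "card (snd (addF x y s)) + b \<le> qe" for y using QF.prems(3) by (simp add: addF_def)
  note ih = QF.IH[OF rangeI bb c1 c2]
  have "(\<Sum>y\<in>UNIV. SS OI FI EI DI (\<lambda>u s b. if b then 1 else 0) (g y) (addF x y s) / real (card OI)
    - SS OR FR ER DR (\<lambda>u s b. if b then 1 else 0) (g y) (addF x y s) / real (card OR))
    \<le> (\<Sum>y\<in>UNIV. eps * (SS OI FI EI DI (\<lambda>u s b. 1) (g y) (addF x y s) / real (card OI))
      + SS OI FI EI DI (\<lambda>u s b. if good s (keyI u) then 0 else 1) (g y) (addF x y s) / real (card OI))"
    by (rule sum_mono) (rule ih)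
  then show ?case unfolding SS_QF[OF finI] SS_QF[OF finR]
    by (simp add: sum_subtractf sum.distrib sum_divide_distrib[symmetric] sum_distrib_left[symmetric])
next
  case (QE d X g)
  have a0: "0 < b" and bb: "\<And>y. bounded (g y) a (b - 1)" using QE.prems by auto
  have c2: "card (snd (addT (d,X,y) s)) + (b - 1) \<le> qe" for y
    using QE.prems(3) a0 by (auto simp: addT_def card_insert_if)
  have c1: "card (fst (addT (d,X,y) s)) + a \<le> qf" for y using QE.prems(2) by (simp add: addT_def)
  note ih = QE.IH[OF rangeI bb c1 c2]
  have "(\<Sum>y\<in>UNIV. SS OI FI EI DI (\<lambda>u s b. if b then 1 else 0) (g y) (addT (d,X,y) s) / real (card OI)
    - SS OR FR ER DR (\<lambda>u s b. if b then 1 else 0) (g y) (addT (d,X,y) s) / real (card OR))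
    \<le> (\<Sum>y\<in>UNIV. eps * (SS OI FI EI DI (\<lambda>u s b. 1) (g y) (addT (d,X,y) s) / real (card OI))
      + SS OI FI EI DI (\<lambda>u s b. if good s (keyI u) then 0 else 1) (g y) (addT (d,X,y) s) / real (card OI))"
    by (rule sum_mono) (rule ih)
  then show ?case unfolding SS_QE[OF finI] SS_QE[OF finR]
    by (simp add: sum_subtractf sum.distrib sum_divide_distrib[symmetric] sum_distrib_left[symmetric])
next
  case (QD d Y g)
  have a0: "0 < b" and bb: "\<And>y. bounded (g y) a (b - 1)" using QD.prems by auto
  have c2: "card (snd (addT (d,y,Y) s)) + (b - 1) \<le> qe" for y
    using QD.prems(3) a0 by (auto simp: addT_def card_insert_if)
  have c1: "card (fst (addT (d,y,Y) s)) + a \<le> qf" for y using QD.prems(2) by (simp add: addT_def)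
  note ih = QD.IH[OF rangeI bb c1 c2]
  have "(\<Sum>y\<in>UNIV. SS OI FI EI DI (\<lambda>u s b. if b then 1 else 0) (g y) (addT (d,y,Y) s) / real (card OI)
    - SS OR FR ER DR (\<lambda>u s b. if b then 1 else 0) (g y) (addT (d,y,Y) s) / real (card OR))
    \<le> (\<Sum>y\<in>UNIV. eps * (SS OI FI EI DI (\<lambda>u s b. 1) (g y) (addT (d,y,Y) s) / real (card OI))
      + SS OI FI EI DI (\<lambda>u s b. if good s (keyI u) then 0 else 1) (g y) (addT (d,y,Y) s) / real (card OI))"
    by (rule sum_mono) (rule ih)
  note main = this
  have qdI: "SS OI FI EI DI H (QD d Y g) s' = (\<Sum>X\<in>UNIV. SS OI FI EI DI H (g X) (addT (d,X,Y) s'))" for H s'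
    by (rule SS_QD[OF finI]) (rule bijI)
  have qdR: "SS OR FR ER DR H (QD d Y g) s' = (\<Sum>X\<in>UNIV. SS OR FR ER DR H (g X) (addT (d,X,Y) s'))" for H s'
    by (rule SS_QD[OF finR]) (rule bijR)
  show ?case unfolding qdI qdR using main
    by (simp add: sum_subtractf sum.distrib sum_divide_distrib[symmetric] sum_distrib_left[symmetric])
qed


lemma xor_eq_iff: "xor (a::'n::len word) b = c \<longleftrightarrow> a = xor c b"
  by (auto simp: xor.assoc)

lemma xor_eq_xor_iff: "xor (a::'n::len word) r = xor b r' \<longleftrightarrow> xor a b = xor r r'"
  by (auto simp: xor_eq_iff xor.assoc xor.left_commute xor.commute)

definition ordT :: "'n::len trip \<Rightarrow> nat" where
  "ordT = (SOME f. inj f)"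

lemma inj_ordT: "inj (ordT :: 'n::len trip \<Rightarrow> nat)"
proof -
  obtain f :: "'n trip \<Rightarrow> nat" and n where "inj_on f UNIV"
    using finite_imp_inj_to_nat_seg[of "UNIV :: 'n trip set"] by auto
  then have "\<exists>f :: 'n trip \<Rightarrow> nat. inj f" by blast
  then show ?thesis unfolding ordT_def by (rule someI_ex)
qed

lemma pairs_card:
  fixes T :: "'a set" and f :: "'a \<Rightarrow> nat"
  assumes "inj_on f T" "finite T"
  shows "2 * card {p\<in>T \<times> T. f (fst p) < f (snd p)} \<le> card T ^ 2"
proof -
  let ?A = "{p\<in>T \<times> T. f (fst p) < f (snd p)}"
  let ?B = "(\<lambda>(a,b). (b,a)) ` ?A"
  have fA: "finite ?A" using assms by auto
  have cB: "card ?B = card ?A" by (rule card_image) (auto simp: inj_on_def)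
  have dis: "?A \<inter> ?B = {}" by auto
  have sub: "?A \<union> ?B \<subseteq> T \<times> T" by auto
  have "card ?A + card ?B = card (?A \<union> ?B)" using fA dis by (simp add: card_Un_disjoint)
  also have "\<dots> \<le> card (T \<times> T)" using sub assms by (intro card_mono) auto
  finally show ?thesis using cB by (simp add: card_cartesian_product power2_eq_square)
qed

locale KS =
  fixes w0 w1 w2 w3 g1 g2 g3 g4 :: "'n::len word \<Rightarrow> 'n word"
begin

definition phi1 :: "'n word \<Rightarrow> 'n word" where "phi1 \<kappa> = xor (w1 \<kappa>) (g1 \<kappa>)"
definition phi4 :: "'n word \<Rightarrow> 'n word" where "phi4 \<kappa> = xor (w2 \<kappa>) (g4 \<kappa>)"

definition p1 :: "'n word \<Rightarrow> 'n trip \<Rightarrow> 'n word" where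
  "p1 k t = xor (phi1 (xor k (fst t))) (snd (fst (snd t)))"
definition p4 :: "'n word \<Rightarrow> 'n trip \<Rightarrow> 'n word" where
  "p4 k t = xor (phi4 (xor k (fst t))) (fst (snd (snd t)))"

definition good :: "'n st \<Rightarrow> 'n word \<Rightarrow> bool" where
  "good s k \<longleftrightarrow>
     (\<forall>p\<in>fst s. \<forall>t\<in>snd s. p1 k t \<noteq> fst p \<and> p4 k t \<noteq> fst p) \<and>
     (\<forall>t\<in>snd s. \<forall>t'\<in>snd s. ordT t < ordT t' \<longrightarrow> fst t \<noteq> fst t' \<longrightarrow> p1 k t \<noteq> p1 k t' \<and> p4 k t \<noteq> p4 k t') \<and>
     (\<forall>t\<in>snd s. \<forall>t'\<in>snd s. p1 k t \<noteq> p4 k t')"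

lemma KB:
  assumes gk: "good_ks w1 w2 g1 g4 \<delta>1 \<delta>2 \<delta>3"
  shows "real (card {k. \<not> good s k}) \<le> real CARD('n word) *
     (2 * \<delta>1 * real (card (fst s)) * real (card (snd s)) + (\<delta>2 + \<delta>3) * real (card (snd s)) ^ 2)"
proof -
  define N where "N = real CARD('n word)"
  have N0: "0 < N" unfolding N_def by simp
  have prk_card: "real (card {k. P k}) \<le> \<delta> * N" if "prk P \<le> \<delta>" for P :: "'n word \<Rightarrow> bool" and \<delta>
    using that N0 unfolding prk_def N_def by (simp add: divide_le_eq)
  note G = gk[unfolded good_ks_def Let_def, folded phi1_def[abs_def] phi4_def[abs_def]]
  have d1: "real (card {k. phi1 (xor k \<Delta>) = y}) \<le> \<delta>1 * N"
       "real (card {k. phi4 (xor k \<Delta>) = y}) \<le> \<delta>1 * N" for \<Delta> y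
    using G by (auto intro!: prk_card)
  have d2: "real (card {k. xor (phi1 (xor k \<Delta>)) (phi1 (xor k \<Delta>')) = y}) \<le> \<delta>2 * N"
       "real (card {k. xor (phi4 (xor k \<Delta>)) (phi4 (xor k \<Delta>')) = y}) \<le> \<delta>2 * N"
    if "\<Delta> \<noteq> \<Delta>'" for \<Delta> \<Delta>' y
    using G that by (auto intro!: prk_card)
  have d3: "real (card {k. xor (phi1 (xor k \<Delta>)) (phi4 (xor k \<Delta>')) = y}) \<le> \<delta>3 * N" for \<Delta> \<Delta>' y
    using G unfolding phi1_def phi4_def by (auto intro!: prk_card)
  define FP where "FP = fst s"
  define T where "T = snd s"
  define Pr where "Pr = {p\<in>T \<times> T. ordT (fst p) < ordT (snd p) \<and> fst (fst p) \<noteq> fst (snd p)}"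
  define A where "A = (\<lambda>(p::'n word \<times> 'n word, t::'n trip). {k. p1 k t = fst p} \<union> {k. p4 k t = fst p})"
  define B where "B = (\<lambda>(t::'n trip, t'::'n trip). {k. p1 k t = p1 k t'} \<union> {k. p4 k t = p4 k t'})"
  define C where "C = (\<lambda>(t::'n trip, t'::'n trip). {k. p1 k t = p4 k t'})"
  have sub: "{k. \<not> good s k} \<subseteq> (\<Union>i\<in>FP \<times> T. A i) \<union> (\<Union>i\<in>Pr. B i) \<union> (\<Union>i\<in>T \<times> T. C i)"
  proof
    fix k assume "k \<in> {k. \<not> good s k}"
    then have ng: "\<not> good s k" by simp
    show "k \<in> (\<Union>i\<in>FP \<times> T. A i) \<union> (\<Union>i\<in>Pr. B i) \<union> (\<Union>i\<in>T \<times> T. C i)"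
    proof (cases "\<exists>p\<in>FP. \<exists>t\<in>T. p1 k t = fst p \<or> p4 k t = fst p")
      case True
      then obtain p t where "p \<in> FP" "t \<in> T" "p1 k t = fst p \<or> p4 k t = fst p" by blast
      then have "k \<in> A (p,t)" "(p,t) \<in> FP \<times> T" unfolding A_def by auto
      then show ?thesis by blast
    next
      case F1: False
      show ?thesis
      proof (cases "\<exists>t\<in>T. \<exists>t'\<in>T. ordT t < ordT t' \<and> fst t \<noteq> fst t' \<and> (p1 k t = p1 k t' \<or> p4 k t = p4 k t')")
        case True
        then obtain t t' where "t \<in> T" "t' \<in> T" "ordT t < ordT t'" "fst t \<noteq> fst t'" "p1 k t = p1 k t' \<or> p4 k t = p4 k t'" by blast
        then have "k \<in> B (t,t')" "(t,t') \<in> Pr" unfolding B_def Pr_def by auto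
        then show ?thesis by blast
      next
        case F2: False
        have "\<exists>t\<in>T. \<exists>t'\<in>T. p1 k t = p4 k t'"
          using ng F1 F2 unfolding good_def FP_def[symmetric] T_def[symmetric] by blast
        then obtain t t' where "t \<in> T" "t' \<in> T" "p1 k t = p4 k t'" by blast
        then have "k \<in> C (t,t')" "(t,t') \<in> T \<times> T" unfolding C_def by auto
        then show ?thesis by blast
      qed
    qed
  qed
  have cA: "real (card (A i)) \<le> 2 * \<delta>1 * N" for i
  proof -
    obtain p t where i: "i = (p,t)" by (cases i)
    have e1: "{k. p1 k t = fst p} = {k. phi1 (xor k (fst t)) = xor (fst p) (snd (fst (snd t)))}"
      unfolding p1_def by (simp add: xor_eq_iff)
    have e4: "{k. p4 k t = fst p} = {k. phi4 (xor k (fst t)) = xor (fst p) (fst (snd (snd t)))}"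
      unfolding p4_def by (simp add: xor_eq_iff)
    have "real (card (A i)) \<le> real (card {k. p1 k t = fst p}) + real (card {k. p4 k t = fst p})"
      unfolding A_def i using card_Un_le[of "{k. p1 k t = fst p}" "{k. p4 k t = fst p}"] by simp
    also have "\<dots> \<le> \<delta>1 * N + \<delta>1 * N"
      unfolding e1 e4 by (intro add_mono d1)
    finally show ?thesis by (simp add: algebra_simps)
  qed
  have cB: "real (card (B i)) \<le> 2 * \<delta>2 * N" if "i \<in> Pr" for i
  proof -
    obtain t t' where i: "i = (t,t')" by (cases i)
    have ne: "fst t \<noteq> fst t'" using that unfolding Pr_def i by auto
    have e1: "{k. p1 k t = p1 k t'} = {k. xor (phi1 (xor k (fst t))) (phi1 (xor k (fst t'))) = xor (snd (fst (snd t))) (snd (fst (snd t')))}"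
      unfolding p1_def by (intro Collect_cong) (rule xor_eq_xor_iff)
    have e4: "{k. p4 k t = p4 k t'} = {k. xor (phi4 (xor k (fst t))) (phi4 (xor k (fst t'))) = xor (fst (snd (snd t))) (fst (snd (snd t')))}"
      unfolding p4_def by (intro Collect_cong) (rule xor_eq_xor_iff)
    have "real (card (B i)) \<le> real (card {k. p1 k t = p1 k t'}) + real (card {k. p4 k t = p4 k t'})"
      unfolding B_def i using card_Un_le[of "{k. p1 k t = p1 k t'}" "{k. p4 k t = p4 k t'}"] by simp
    also have "\<dots> \<le> \<delta>2 * N + \<delta>2 * N"
      unfolding e1 e4 using d2[OF ne] by (intro add_mono) auto
    finally show ?thesis by (simp add: algebra_simps)
  qed
  have cC: "real (card (C i)) \<le> \<delta>3 * N" for i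
  proof -
    obtain t t' where i: "i = (t,t')" by (cases i)
    have e: "C i = {k. xor (phi1 (xor k (fst t))) (phi4 (xor k (fst t'))) = xor (snd (fst (snd t))) (fst (snd (snd t')))}"
      unfolding C_def i p1_def p4_def by (simp only: prod.case, intro Collect_cong) (rule xor_eq_xor_iff)
    show ?thesis unfolding e by (rule d3)
  qed
  have "real (card {k. \<not> good s k}) \<le> real (card ((\<Union>i\<in>FP \<times> T. A i) \<union> (\<Union>i\<in>Pr. B i) \<union> (\<Union>i\<in>T \<times> T. C i)))"
    using sub by (intro of_nat_mono card_mono) auto
  also have "\<dots> \<le> real (card (\<Union>i\<in>FP \<times> T. A i)) + real (card (\<Union>i\<in>Pr. B i)) + real (card (\<Union>i\<in>T \<times> T. C i))"
  proof -
    let ?X = "\<Union>i\<in>FP \<times> T. A i" and ?Y = "\<Union>i\<in>Pr. B i" and ?Z = "\<Union>i\<in>T \<times> T. C i"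
    have "card (?X \<union> ?Y \<union> ?Z) \<le> card ?X + card ?Y + card ?Z"
      using card_Un_le[of "?X \<union> ?Y" ?Z] card_Un_le[of ?X ?Y] by linarith
    then show ?thesis by (simp only: of_nat_add[symmetric] of_nat_le_iff)
  qed
  also have "\<dots> \<le> (\<Sum>i\<in>FP \<times> T. real (card (A i))) + (\<Sum>i\<in>Pr. real (card (B i))) + (\<Sum>i\<in>T \<times> T. real (card (C i)))"
  proof -
    have u: "real (card (\<Union>i\<in>I. X i)) \<le> (\<Sum>i\<in>I. real (card (X i)))" if "finite I" for I :: "'x set" and X :: "'x \<Rightarrow> 'n word set"
      using card_UN_le[OF that, of X] by (simp only: of_nat_sum[symmetric] of_nat_le_iff)
    show ?thesis by (intro add_mono u) auto
  qed
  also have "\<dots> \<le> (\<Sum>i\<in>FP \<times> T. 2 * \<delta>1 * N) + (\<Sum>i\<in>Pr. 2 * \<delta>2 * N) + (\<Sum>i\<in>T \<times> T. \<delta>3 * N)"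
    by (intro add_mono sum_mono cA cB cC)
  also have "\<dots> = 2 * \<delta>1 * N * real (card FP) * real (card T) + 2 * \<delta>2 * N * real (card Pr) + \<delta>3 * N * real (card T) ^ 2"
    by (simp add: card_cartesian_product power2_eq_square)
  also have "\<dots> \<le> 2 * \<delta>1 * N * real (card FP) * real (card T) + \<delta>2 * N * real (card T) ^ 2 + \<delta>3 * N * real (card T) ^ 2"
  proof -
    have "\<delta>1 \<ge> 0"
    proof -
      have "0 \<le> real (card {k. phi1 (xor k 0) = 0})" by simp
      then have "0 \<le> \<delta>1 * N" using d1(1)[of 0 0] by linarith
      then show ?thesis using N0 by (simp add: zero_le_mult_iff)
    qed
    have "\<delta>2 \<ge> 0"
    proof -
      have "0 \<le> real (card {k. xor (phi1 (xor k 0)) (phi1 (xor k 1)) = 0})" by simp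
      then have "0 \<le> \<delta>2 * N" using d2(1)[of 0 1 0] by simp
      then show ?thesis using N0 by (simp add: zero_le_mult_iff)
    qed
    have "card Pr \<le> card {p\<in>T \<times> T. ordT (fst p) < ordT (snd p)}"
      unfolding Pr_def by (intro card_mono) auto
    moreover have "2 * card {p\<in>T \<times> T. ordT (fst p) < ordT (snd p)} \<le> card T ^ 2"
      by (rule pairs_card) (auto intro: inj_on_subset[OF inj_ordT])
    ultimately have "2 * card Pr \<le> card T ^ 2" by linarith
    then have "real (2 * card Pr) \<le> real (card T ^ 2)" by (simp only: of_nat_le_iff)
    then have h: "2 * real (card Pr) \<le> real (card T) ^ 2" by simp
    have "0 \<le> \<delta>2 * N" using \<open>\<delta>2 \<ge> 0\<close> N0 by simp
    from mult_left_mono[OF h this]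
    have "2 * \<delta>2 * N * real (card Pr) \<le> \<delta>2 * N * real (card T) ^ 2"
      by (simp add: algebra_simps)
    then show ?thesis by simp
  qed
  finally show ?thesis unfolding N_def FP_def T_def by (simp add: algebra_simps)
qed

end


definition ICset :: "('k \<Rightarrow> 'b \<Rightarrow> 'b) set" where
  "ICset = {IC. \<forall>key. bij (IC key)}"

definition Cset :: "('k \<times> 'b \<times> 'b) set \<Rightarrow> ('k \<Rightarrow> 'b \<Rightarrow> 'b) set" where
  "Cset T = {IC\<in>ICset. \<forall>t\<in>T. IC (fst t) (fst (snd t)) = snd (snd t)}"

definition sw :: "'b \<Rightarrow> 'b \<Rightarrow> 'b \<Rightarrow> 'b" where
  "sw a b y = (if y = a then b else if y = b then a else y)"

lemma sw_sw: "sw a b (sw a b y) = y"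
  by (auto simp: sw_def)

lemma bij_sw: "bij (sw a b)"
  by (rule o_bij[of "sw a b"]) (auto simp: sw_sw fun_eq_iff)

lemma Cset_insert: "Cset (insert (d,X,Y) F) = {IC\<in>Cset F. IC d X = Y}"
  by (auto simp: Cset_def)

lemma Cset_step:
  fixes F :: "('k::finite \<times> 'b::finite \<times> 'b) set"
  assumes fin: "finite F" and nt: "(d,X,Y) \<notin> F"
  shows "card (Cset (insert (d,X,Y) F)) * (CARD('b) - card F) \<le> card (Cset F)"
proof -
  let ?C = "Cset F"
  let ?C' = "{IC\<in>?C. IC d X = Y}"
  have fC: "finite ?C" by (rule finite_subset[of _ ICset]) (auto simp: Cset_def)
  show ?thesis
  proof (cases "(\<exists>Y'. (d,X,Y') \<in> F) \<or> (\<exists>X'. (d,X',Y) \<in> F)")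
    case True
    have "?C' = {}"
    proof (rule ccontr)
      assume "?C' \<noteq> {}"
      then obtain IC where IC: "IC \<in> ?C" "IC d X = Y" by blast
      then have b: "bij (IC d)" and c: "\<And>t. t \<in> F \<Longrightarrow> IC (fst t) (fst (snd t)) = snd (snd t)"
        by (auto simp: Cset_def ICset_def)
      from True show False
      proof
        assume "\<exists>Y'. (d,X,Y') \<in> F"
        then obtain Y' where "(d,X,Y') \<in> F" by blast
        with c[OF this] IC nt show False by auto
      next
        assume "\<exists>X'. (d,X',Y) \<in> F"
        then obtain X' where X': "(d,X',Y) \<in> F" by blast
        with c[OF this] IC have "IC d X' = IC d X" by auto
        then have "X' = X" using b by (auto dest: bij_is_inj injD)
        with X' nt show False by simp
      qed
    qed
    then show ?thesis unfolding Cset_insert by (simp only: card.empty mult_0 zero_le)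
  next
    case False
    define Yu where "Yu = (\<lambda>t. snd (snd t)) ` {t\<in>F. fst t = d}"
    have cYu: "card Yu \<le> card F" unfolding Yu_def
      by (rule order_trans[OF card_image_le]) (auto intro: card_mono fin)
    have YnYu: "Y \<notin> Yu" using False unfolding Yu_def by force
    have key: "card ?C' \<le> card {IC\<in>?C. IC d X = Y''}" if Y'': "Y'' \<notin> Yu" for Y''
    proof -
      define \<sigma> where "\<sigma> IC = IC(d := sw Y Y'' \<circ> IC d)" for IC :: "'k \<Rightarrow> 'b \<Rightarrow> 'b"
      have ss: "\<sigma> (\<sigma> IC) = IC" for IC
        by (auto simp: \<sigma>_def fun_eq_iff sw_sw)
      have inj: "inj_on \<sigma> ?C'" by (rule inj_on_inverseI[of _ \<sigma>]) (rule ss)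
      have img: "\<sigma> ` ?C' \<subseteq> {IC\<in>?C. IC d X = Y''}"
      proof
        fix IC' assume "IC' \<in> \<sigma> ` ?C'"
        then obtain IC where IC: "IC \<in> ?C" "IC d X = Y" and e: "IC' = \<sigma> IC" by blast
        have bij': "bij (IC' key)" for key
          using IC(1) unfolding e \<sigma>_def Cset_def ICset_def by (auto intro: bij_comp bij_sw)
        have cons': "IC' (fst t) (fst (snd t)) = snd (snd t)" if t: "t \<in> F" for t
        proof -
          have ct: "IC (fst t) (fst (snd t)) = snd (snd t)" using IC(1) t by (auto simp: Cset_def)
          show ?thesis
          proof (cases "fst t = d")
            case True
            then have "snd (snd t) \<in> Yu" using t unfolding Yu_def by auto
            then have "snd (snd t) \<noteq> Y" "snd (snd t) \<noteq> Y''" using YnYu Y'' by auto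
            then show ?thesis using ct True unfolding e \<sigma>_def by (auto simp: sw_def)
          next
            case False
            then show ?thesis using ct unfolding e \<sigma>_def by auto
          qed
        qed
        have "IC' d X = Y''" unfolding e \<sigma>_def using IC(2) by (simp add: sw_def)
        then show "IC' \<in> {IC\<in>?C. IC d X = Y''}" using bij' cons' by (auto simp: Cset_def ICset_def)
      qed
      have "card ?C' = card (\<sigma> ` ?C')" using inj by (simp add: card_image)
      also have "\<dots> \<le> card {IC\<in>?C. IC d X = Y''}" by (rule card_mono) (use fC img in auto)
      finally show ?thesis .
    qed
    have s1: "card ?C = (\<Sum>Y''\<in>UNIV. card {IC\<in>?C. IC d X = Y''})"
      using sum.group[of ?C UNIV "\<lambda>IC. IC d X" "\<lambda>_. 1::nat", symmetric] fC by simp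
    have s2: "(\<Sum>Y''\<in>UNIV - Yu. card {IC\<in>?C. IC d X = Y''}) \<le> (\<Sum>Y''\<in>UNIV. card {IC\<in>?C. IC d X = Y''})"
      by (rule sum_mono2) auto
    have s3: "(\<Sum>Y''\<in>UNIV - Yu. card ?C') \<le> (\<Sum>Y''\<in>UNIV - Yu. card {IC\<in>?C. IC d X = Y''})"
      by (rule sum_mono) (rule key, simp)
    have "card (UNIV - Yu) * card ?C' \<le> card ?C" using s1 s2 s3 by simp
    moreover have "CARD('b) - card F \<le> card (UNIV - Yu)"
      using cYu by (simp add: card_Diff_subset)
    ultimately have "(CARD('b) - card F) * card ?C' \<le> card ?C"
      by (meson le_trans mult_le_mono1)
    then show ?thesis unfolding Cset_insert by (simp add: mult.commute)
  qed
qed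

lemma ICL:
  fixes T :: "('k::finite \<times> 'b::finite \<times> 'b) set"
  assumes "finite T"
  shows "card (Cset T) * (\<Prod>i<card T. (CARD('b) - i)) \<le> card (ICset :: ('k \<Rightarrow> 'b \<Rightarrow> 'b) set)"
  using assms
proof (induction T rule: finite_induct)
  case empty
  then show ?case by (simp add: Cset_def)
next
  case (insert t F)
  obtain d X Y where t: "t = (d,X,Y)" by (cases t) auto
  have "card (Cset (insert t F)) * (\<Prod>i<card (insert t F). (CARD('b) - i))
      = (card (Cset (insert (d,X,Y) F)) * (CARD('b) - card F)) * (\<Prod>i<card F. (CARD('b) - i))"
    using insert t by (simp add: prod.lessThan_Suc mult.assoc mult.commute mult.left_commute)
  also have "\<dots> \<le> card (Cset F) * (\<Prod>i<card F. (CARD('b) - i))"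
    by (rule mult_le_mono1) (rule Cset_step, use insert t in auto)
  also have "\<dots> \<le> card (ICset :: ('k \<Rightarrow> 'b \<Rightarrow> 'b) set)" by (rule insert.IH)
  finally show ?case .
qed


definition Base :: "('a \<times> 'b) set \<Rightarrow> ('a \<Rightarrow> 'b) set" where
  "Base Q = {F. \<forall>p\<in>Q. F (fst p) = snd p}"

lemma card_Base:
  fixes Q :: "('a::finite \<times> 'b::finite) set"
  assumes inj: "inj_on fst Q"
  shows "card (Base Q) = CARD('b) ^ (CARD('a) - card Q)"
proof -
  let ?D = "fst ` Q"
  let ?B = "\<lambda>x. if x \<in> ?D then {v. (x,v) \<in> Q} else (UNIV :: 'b set)"
  have iff: "(\<forall>p\<in>Q. F (fst p) = snd p) \<longleftrightarrow> (\<forall>x. x \<in> ?D \<longrightarrow> (x, F x) \<in> Q)" for F :: "'a \<Rightarrow> 'b"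
  proof
    assume F: "\<forall>p\<in>Q. F (fst p) = snd p"
    show "\<forall>x. x \<in> ?D \<longrightarrow> (x, F x) \<in> Q"
    proof (intro allI impI)
      fix x assume "x \<in> fst ` Q"
      then obtain v where "(x,v) \<in> Q" by force
      with F show "(x, F x) \<in> Q" by force
    qed
  next
    assume F: "\<forall>x. x \<in> ?D \<longrightarrow> (x, F x) \<in> Q"
    show "\<forall>p\<in>Q. F (fst p) = snd p"
    proof
      fix p assume p: "p \<in> Q"
      then have "(fst p, F (fst p)) \<in> Q" using F by force
      with p inj show "F (fst p) = snd p" by (metis fst_conv inj_on_def prod.collapse snd_conv)
    qed
  qed
  have e: "Base Q = Pi\<^sub>E UNIV ?B"
    unfolding Base_def PiE_UNIV_domain Pi_def using iff by auto
  have c1: "card (?B x) = 1" if xD: "x \<in> ?D" for x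
  proof -
    obtain v where v: "(x,v) \<in> Q" using xD by force
    have "{v. (x,v) \<in> Q} = {v}"
    proof (intro set_eqI iffI)
      fix v' assume "v' \<in> {v. (x,v) \<in> Q}"
      then have "(x,v') \<in> Q" by simp
      with v inj show "v' \<in> {v}" by (metis fst_conv inj_on_def prod.inject singletonI)
    qed (use v in simp)
    then show ?thesis using xD by simp
  qed
  have "card (Base Q) = (\<Prod>x\<in>UNIV. card (?B x))" unfolding e by (rule card_PiE) simp
  also have "\<dots> = (\<Prod>x\<in>UNIV. if x \<in> ?D then 1 else CARD('b))"
    by (intro prod.cong refl) (use c1 in auto)
  also have "\<dots> = (\<Prod>x\<in>UNIV \<inter> - ?D. CARD('b))"
    by (subst prod.If_cases) auto
  also have "\<dots> = CARD('b) ^ card (- ?D)" by simp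
  also have "card (- ?D) = CARD('a) - card Q"
    using card_image[OF inj] by (simp add: card_Diff_subset Compl_eq_Diff_UNIV)
  finally show ?thesis .
qed

lemma card_le_CARD: "card (Q :: ('a::finite \<times> 'b) set) \<le> CARD('a)" if "inj_on fst Q"
  using card_image[OF that] card_mono[of "UNIV::'a set" "fst ` Q"] by simp

lemma card_Base_pt:
  fixes Q :: "('a::finite \<times> 'b::finite) set"
  assumes inj: "inj_on fst Q" and u: "u \<notin> fst ` Q"
  shows "card {F\<in>Base Q. F u = c} * CARD('b) = card (Base Q)"
proof -
  have e: "{F\<in>Base Q. F u = c} = Base (insert (u,c) Q)" by (auto simp: Base_def)
  have inj': "inj_on fst (insert (u,c) Q)" using inj u by auto
  have nq: "(u,c) \<notin> Q" using u by force
  have le: "card Q + 1 \<le> CARD('a)" using card_le_CARD[OF inj'] nq by simp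
  show ?thesis unfolding e card_Base[OF inj'] card_Base[OF inj] using nq le
    by (simp add: power_Suc2[symmetric] Suc_diff_le[symmetric])
qed

lemma card_Base_rel:
  fixes Q :: "('a::finite \<times> 'b::finite) set"
  assumes inj: "inj_on fst Q" and u: "u \<notin> fst ` Q" and u': "u' \<notin> fst ` Q" and uu: "u \<noteq> u'"
  shows "card {F\<in>Base Q. F u = h (F u')} * CARD('b) = card (Base Q)"
proof -
  have fB: "finite {F\<in>Base Q. F u = h (F u')}" by simp
  have "card {F\<in>Base Q. F u = h (F u')} = (\<Sum>z\<in>UNIV. card {F\<in>{F\<in>Base Q. F u = h (F u')}. F u' = z})"
    using sum.group[OF fB, of UNIV "\<lambda>F. F u'" "\<lambda>_. 1::nat", symmetric] by simp
  also have "\<dots> = (\<Sum>z\<in>UNIV. card {F\<in>Base (insert (u',z) Q). F u = h z})"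
    by (intro sum.cong refl arg_cong[where f=card]) (auto simp: Base_def)
  finally have e: "card {F\<in>Base Q. F u = h (F u')} = (\<Sum>z\<in>UNIV. card {F\<in>Base (insert (u',z) Q). F u = h z})" .
  have inj': "inj_on fst (insert (u',z) Q)" for z using inj u' by auto
  have u2: "u \<notin> fst ` insert (u',z) Q" for z using u uu by auto
  have "card {F\<in>Base Q. F u = h (F u')} * CARD('b) * CARD('b) = (\<Sum>z\<in>UNIV. card {F\<in>Base (insert (u',z) Q). F u = h z} * CARD('b)) * CARD('b)"
    unfolding e by (simp add: sum_distrib_right)
  also have "\<dots> = (\<Sum>z\<in>UNIV. card (Base (insert (u',z) Q))) * CARD('b)"
    using card_Base_pt[OF inj' u2] by simp
  also have "\<dots> = (\<Sum>z\<in>UNIV. card (Base (insert (u',z) Q)) * CARD('b))"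
    by (simp add: sum_distrib_right)
  also have "\<dots> = (\<Sum>z\<in>(UNIV::'b set). card (Base Q))"
  proof (intro sum.cong refl)
    fix z
    have "{F\<in>Base Q. F u' = z} = Base (insert (u',z) Q)" by (auto simp: Base_def)
    then show "card (Base (insert (u',z) Q)) * CARD('b) = card (Base Q)"
      using card_Base_pt[OF inj u', of z] by simp
  qed
  also have "\<dots> = card (Base Q) * CARD('b)" by simp
  finally show ?thesis by simp
qed


lemma xor_cancel_left: "xor (a::'n::len word) (xor a b) = b"
  by (simp add: xor.assoc[symmetric])

lemma xor_solve: "xor (a::'n::len word) x = w \<longleftrightarrow> x = xor a w"
  by (auto simp: xor_cancel_left)

lemma xor_solve2: "xor (a::'n::len word) x = xor b y \<longleftrightarrow> x = xor (xor a b) y"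
  by (simp add: xor_solve xor.assoc)

context KS
begin

definition KAF :: "('n word \<Rightarrow> 'n word) \<Rightarrow> 'n word \<Rightarrow> 'n blk \<Rightarrow> 'n blk" where
  "KAF F \<kappa> X = KAFw F w0 w1 w2 w3 [g1, g2, g3, g4] \<kappa> X"

definition c2 :: "'n word \<Rightarrow> 'n trip \<Rightarrow> 'n word" where
  "c2 k t = xor (g2 (xor k (fst t))) (xor (w0 (xor k (fst t))) (fst (fst (snd t))))"
definition c3 :: "'n word \<Rightarrow> 'n trip \<Rightarrow> 'n word" where
  "c3 k t = xor (g3 (xor k (fst t))) (xor (w3 (xor k (fst t))) (snd (snd (snd t))))"
definition e2 :: "'n word \<Rightarrow> 'n trip \<Rightarrow> 'n word" where
  "e2 k t = xor (xor (w1 (xor k (fst t))) (snd (fst (snd t)))) (xor (w3 (xor k (fst t))) (snd (snd (snd t))))"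
definition e3 :: "'n word \<Rightarrow> 'n trip \<Rightarrow> 'n word" where
  "e3 k t = xor (xor (w0 (xor k (fst t))) (fst (fst (snd t)))) (xor (w2 (xor k (fst t))) (fst (snd (snd t))))"

definition p2 :: "'n word \<Rightarrow> ('n word \<Rightarrow> 'n word) \<Rightarrow> 'n trip \<Rightarrow> 'n word" where
  "p2 k F t = xor (c2 k t) (F (p1 k t))"
definition p3 :: "'n word \<Rightarrow> ('n word \<Rightarrow> 'n word) \<Rightarrow> 'n trip \<Rightarrow> 'n word" where
  "p3 k F t = xor (c3 k t) (F (p4 k t))"
definition r2 :: "'n word \<Rightarrow> ('n word \<Rightarrow> 'n word) \<Rightarrow> 'n trip \<Rightarrow> 'n word" where
  "r2 k F t = xor (e2 k t) (F (p4 k t))"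
definition r3 :: "'n word \<Rightarrow> ('n word \<Rightarrow> 'n word) \<Rightarrow> 'n trip \<Rightarrow> 'n word" where
  "r3 k F t = xor (e3 k t) (F (p1 k t))"

lemma KAF_sol:
  assumes "F (p2 k F t) = r2 k F t" "F (p3 k F t) = r3 k F t"
  shows "KAF F (xor k (fst t)) (fst (snd t)) = snd (snd t)"
proof -
  obtain d L R S T where t: "t = (d, (L, R), (S, T))" by (cases t) auto
  let ?\<kappa> = "xor k d"
  define a1 where "a1 = xor (w1 ?\<kappa>) R"
  define l0 where "l0 = xor (w0 ?\<kappa>) L"
  have in1: "xor (g1 ?\<kappa>) a1 = p1 k t"
    unfolding a1_def p1_def phi1_def t by (simp add: xor.assoc xor.left_commute xor.commute)
  define X2 where "X2 = xor l0 (F (p1 k t))"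
  have in2: "xor (g2 ?\<kappa>) X2 = p2 k F t"
    unfolding X2_def p2_def c2_def l0_def t by (simp add: xor.assoc)
  define X3 where "X3 = xor a1 (F (p2 k F t))"
  have X3: "X3 = xor (xor (w3 ?\<kappa>) T) (F (p4 k t))"
    unfolding X3_def assms(1) by (simp add: r2_def e2_def a1_def t xor.assoc xor.left_commute xor.commute xor_cancel_left)
  have in3: "xor (g3 ?\<kappa>) X3 = p3 k F t"
    unfolding X3 p3_def c3_def t by (simp add: xor.assoc)
  define X4 where "X4 = xor X2 (F (p3 k F t))"
  have X4: "X4 = xor (w2 ?\<kappa>) S"
    unfolding X4_def assms(2)
    by (simp add: r3_def e3_def X2_def l0_def t  xor.assoc xor.left_commute xor.commute xor_cancel_left)
  have in4: "xor (g4 ?\<kappa>) X4 = p4 k t"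
    unfolding X4 p4_def phi4_def t by (simp add: xor.assoc xor.left_commute xor.commute)
  have "KAF F ?\<kappa> (L, R) = xor2 (w2 ?\<kappa>, w3 ?\<kappa>) (Psi F (g4 ?\<kappa>) (Psi F (g3 ?\<kappa>) (Psi F (g2 ?\<kappa>) (Psi F (g1 ?\<kappa>) (l0, a1)))))"
    unfolding KAF_def KAFw_def by (simp add: xor2_def l0_def a1_def)
  also have "Psi F (g1 ?\<kappa>) (l0, a1) = (a1, X2)" by (simp add: Psi_def in1 X2_def)
  also have "Psi F (g2 ?\<kappa>) (a1, X2) = (X2, X3)" by (simp add: Psi_def in2 X3_def)
  also have "Psi F (g3 ?\<kappa>) (X2, X3) = (X3, X4)" by (simp add: Psi_def in3 X4_def)
  also have "Psi F (g4 ?\<kappa>) (X3, X4) = (X4, xor X3 (F (p4 k t)))" by (simp add: Psi_def in4)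
  also have "xor2 (w2 ?\<kappa>, w3 ?\<kappa>) (X4, xor X3 (F (p4 k t))) = (S, T)"
    unfolding xor2_def X4 X3 by (simp add: xor.assoc xor_cancel_left)
  finally show ?thesis using t by simp
qed


lemma ordT_cases: "t \<noteq> t' \<Longrightarrow> ordT t < ordT t' \<or> ordT t' < ordT t"
  by (metis inj_ordT injD linorder_neqE_nat)

definition Wset :: "'n word \<Rightarrow> ('n word \<times> 'n word) set \<Rightarrow> 'n trip set \<Rightarrow> 'n word set" where
  "Wset k FP T = fst ` FP \<union> p1 k ` T \<union> p4 k ` T"

definition good2 :: "'n word \<Rightarrow> ('n word \<times> 'n word) set \<Rightarrow> 'n trip set \<Rightarrow> ('n word \<Rightarrow> 'n word) \<Rightarrow> bool" where
  "good2 k FP T F \<longleftrightarrow>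
     (\<forall>t\<in>T. \<forall>w\<in>Wset k FP T. p2 k F t \<noteq> w \<and> p3 k F t \<noteq> w) \<and>
     (\<forall>t\<in>T. \<forall>t'\<in>T. ordT t < ordT t' \<longrightarrow> p2 k F t \<noteq> p2 k F t' \<and> p3 k F t \<noteq> p3 k F t') \<and>
     (\<forall>t\<in>T. \<forall>t'\<in>T. p2 k F t \<noteq> p3 k F t')"

definition sat :: "'n word \<Rightarrow> 'n trip set \<Rightarrow> ('n word \<Rightarrow> 'n word) \<Rightarrow> bool" where
  "sat k T F \<longleftrightarrow> (\<forall>t\<in>T. F (p2 k F t) = r2 k F t \<and> F (p3 k F t) = r3 k F t)"

lemma agree:
  assumes "\<forall>x\<in>Wset k FP T. F x = F0 x" "t \<in> T"
  shows "p2 k F t = p2 k F0 t" "p3 k F t = p3 k F0 t" "r2 k F t = r2 k F0 t" "r3 k F t = r3 k F0 t"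
  using assms unfolding Wset_def p2_def p3_def r2_def r3_def by auto

lemma agree_good2:
  assumes "\<forall>x\<in>Wset k FP T. F x = F0 x"
  shows "good2 k FP T F \<longleftrightarrow> good2 k FP T F0"
proof -
  have "\<And>t. t \<in> T \<Longrightarrow> p2 k F t = p2 k F0 t \<and> p3 k F t = p3 k F0 t" using agree[OF assms] by auto
  then show ?thesis unfolding good2_def by auto
qed

lemma agree_Base:
  assumes "\<forall>x\<in>Wset k FP T. F x = F0 x"
  shows "F \<in> Base FP \<longleftrightarrow> F0 \<in> Base FP"
  using assms unfolding Wset_def Base_def by force

lemma fiber_counts:
  assumes F0: "F0 \<in> Base FP" "good2 k FP T F0"
  defines "W \<equiv> Wset k FP T"
  shows "CARD('n word) ^ (2 * card T) * card {F\<in>Base FP. good2 k FP T F \<and> sat k T F \<and> (\<forall>x\<in>W. F x = F0 x)}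
       = card {F\<in>Base FP. good2 k FP T F \<and> (\<forall>x\<in>W. F x = F0 x)}"
proof -
  define Q0 where "Q0 = (\<lambda>x. (x, F0 x)) ` W"
  define Q2 where "Q2 = (\<lambda>t. (p2 k F0 t, r2 k F0 t)) ` T"
  define Q3 where "Q3 = (\<lambda>t. (p3 k F0 t, r3 k F0 t)) ` T"
  have g: "\<forall>t\<in>T. \<forall>w\<in>W. p2 k F0 t \<noteq> w \<and> p3 k F0 t \<noteq> w"
      "\<forall>t\<in>T. \<forall>t'\<in>T. ordT t < ordT t' \<longrightarrow> p2 k F0 t \<noteq> p2 k F0 t' \<and> p3 k F0 t \<noteq> p3 k F0 t'"
      "\<forall>t\<in>T. \<forall>t'\<in>T. p2 k F0 t \<noteq> p3 k F0 t'"
    using F0(2) unfolding good2_def W_def by auto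
  have inj2: "inj_on (p2 k F0) T"
  proof (rule inj_onI)
    fix t t' assume "t \<in> T" "t' \<in> T" "p2 k F0 t = p2 k F0 t'"
    then show "t = t'" using g(2) ordT_cases[of t t'] by metis
  qed
  have inj3: "inj_on (p3 k F0) T"
  proof (rule inj_onI)
    fix t t' assume "t \<in> T" "t' \<in> T" "p3 k F0 t = p3 k F0 t'"
    then show "t = t'" using g(2) ordT_cases[of t t'] by metis
  qed
  have fQ0: "fst ` Q0 = W" unfolding Q0_def by force
  have fQ2: "fst ` Q2 = p2 k F0 ` T" unfolding Q2_def by force
  have fQ3: "fst ` Q3 = p3 k F0 ` T" unfolding Q3_def by force
  have injQ0: "inj_on fst Q0" unfolding Q0_def by (auto simp: inj_on_def)
  have dis1: "W \<inter> p2 k F0 ` T = {}" "W \<inter> p3 k F0 ` T = {}" "p2 k F0 ` T \<inter> p3 k F0 ` T = {}"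
    using g by auto
  have ipair: "inj_on fst ((\<lambda>t. (f t, h t)) ` T)" if "inj_on f T" for f h :: "'n trip \<Rightarrow> 'n word"
    using that by (auto simp: inj_on_def)
  have injQ2: "inj_on fst Q2" unfolding Q2_def by (rule ipair[OF inj2])
  have injQ3: "inj_on fst Q3" unfolding Q3_def by (rule ipair[OF inj3])
  have injQ: "inj_on fst (Q0 \<union> Q2 \<union> Q3)"
  proof -
    have i1: "inj_on fst (Q0 \<union> Q2)"
      unfolding inj_on_Un using injQ0 injQ2 fQ0 fQ2 dis1 by blast
    have "fst ` (Q0 \<union> Q2) \<inter> fst ` Q3 = {}" using fQ0 fQ2 fQ3 dis1 by (auto simp: image_Un)
    then show ?thesis unfolding inj_on_Un[of fst "Q0 \<union> Q2" Q3] using i1 injQ3 by blast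
  qed
  have cQ: "card (Q0 \<union> Q2 \<union> Q3) = card W + card T + card T"
  proof -
    have "card (Q0 \<union> Q2 \<union> Q3) = card (fst ` (Q0 \<union> Q2 \<union> Q3))" by (rule card_image[OF injQ, symmetric])
    also have "fst ` (Q0 \<union> Q2 \<union> Q3) = W \<union> p2 k F0 ` T \<union> p3 k F0 ` T"
      using fQ0 fQ2 fQ3 by (simp add: image_Un)
    also have "card \<dots> = card W + card (p2 k F0 ` T) + card (p3 k F0 ` T)"
      using dis1 by (simp add: card_Un_disjoint Int_Un_distrib2)
    also have "\<dots> = card W + card T + card T" using card_image[OF inj2] card_image[OF inj3] by simp
    finally show ?thesis .
  qed
  have cQ0: "card Q0 = card W" using card_image[OF injQ0] fQ0 by simp
  have le: "card W + card T + card T \<le> CARD('n word)" using card_le_CARD[OF injQ] cQ by simp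
  have eA: "{F\<in>Base FP. good2 k FP T F \<and> (\<forall>x\<in>W. F x = F0 x)} = Base Q0"
  proof (intro set_eqI iffI)
    fix F assume "F \<in> {F\<in>Base FP. good2 k FP T F \<and> (\<forall>x\<in>W. F x = F0 x)}"
    then show "F \<in> Base Q0" unfolding Q0_def Base_def by auto
  next
    fix F assume "F \<in> Base Q0"
    then have a: "\<forall>x\<in>W. F x = F0 x" unfolding Q0_def Base_def by auto
    show "F \<in> {F\<in>Base FP. good2 k FP T F \<and> (\<forall>x\<in>W. F x = F0 x)}"
      using a agree_Base[of k FP T F F0] agree_good2[of k FP T F F0] F0 unfolding W_def by auto
  qed
  have eB: "{F\<in>Base FP. good2 k FP T F \<and> sat k T F \<and> (\<forall>x\<in>W. F x = F0 x)} = Base (Q0 \<union> Q2 \<union> Q3)"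
  proof (intro set_eqI iffI)
    fix F assume F: "F \<in> {F\<in>Base FP. good2 k FP T F \<and> sat k T F \<and> (\<forall>x\<in>W. F x = F0 x)}"
    then have a: "\<forall>x\<in>W. F x = F0 x" and s: "sat k T F" by auto
    have "\<forall>t\<in>T. F (p2 k F0 t) = r2 k F0 t \<and> F (p3 k F0 t) = r3 k F0 t"
      using s agree[of k FP T F F0] a unfolding sat_def W_def by metis
    then show "F \<in> Base (Q0 \<union> Q2 \<union> Q3)" using a unfolding Q0_def Q2_def Q3_def Base_def by auto
  next
    fix F assume F: "F \<in> Base (Q0 \<union> Q2 \<union> Q3)"
    have a: "\<forall>x\<in>W. F x = F0 x"
    proof
      fix x assume "x \<in> W"
      then have "(x, F0 x) \<in> Q0 \<union> Q2 \<union> Q3" unfolding Q0_def by blast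
      with F show "F x = F0 x" unfolding Base_def by force
    qed
    have s0: "\<forall>t\<in>T. F (p2 k F0 t) = r2 k F0 t \<and> F (p3 k F0 t) = r3 k F0 t"
    proof
      fix t assume t: "t \<in> T"
      then have "(p2 k F0 t, r2 k F0 t) \<in> Q0 \<union> Q2 \<union> Q3" "(p3 k F0 t, r3 k F0 t) \<in> Q0 \<union> Q2 \<union> Q3"
        unfolding Q2_def Q3_def by blast+
      with F show "F (p2 k F0 t) = r2 k F0 t \<and> F (p3 k F0 t) = r3 k F0 t" unfolding Base_def by force
    qed
    have "sat k T F" unfolding sat_def using s0 agree[of k FP T F F0] a unfolding W_def by metis
    then show "F \<in> {F\<in>Base FP. good2 k FP T F \<and> sat k T F \<and> (\<forall>x\<in>W. F x = F0 x)}"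
      using a agree_Base[of k FP T F F0] agree_good2[of k FP T F F0] F0 unfolding W_def by auto
  qed
  have "CARD('n word) ^ (2 * card T) * card (Base (Q0 \<union> Q2 \<union> Q3)) = card (Base Q0)"
    unfolding card_Base[OF injQ] card_Base[OF injQ0] cQ cQ0 using le
    by (simp add: power_add[symmetric])
  then show ?thesis unfolding eA eB .
qed


lemma G_count:
  "CARD('n word) ^ (2 * card T) * card {F\<in>Base FP. good2 k FP T F \<and> sat k T F}
     = card {F\<in>Base FP. good2 k FP T F}"
proof -
  define W where "W = Wset k FP T"
  define \<rho> where "\<rho> F = (\<lambda>x. if x \<in> W then F x else 0)" for F :: "'n word \<Rightarrow> 'n word"
  define G where "G = {F\<in>Base FP. good2 k FP T F}"
  define G' where "G' = {F\<in>Base FP. good2 k FP T F \<and> sat k T F}"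
  have \<rho>eq: "\<rho> F = \<rho> F0 \<longleftrightarrow> (\<forall>x\<in>W. F x = F0 x)" for F F0
    unfolding \<rho>_def fun_eq_iff by metis
  have cG: "card G = (\<Sum>a\<in>\<rho> ` G. card {F\<in>G. \<rho> F = a})"
    using sum.group[of G "\<rho> ` G" \<rho> "\<lambda>_. 1::nat"] by simp
  have subG: "\<rho> ` G' \<subseteq> \<rho> ` G" unfolding G_def G'_def by auto
  have cG': "card G' = (\<Sum>a\<in>\<rho> ` G. card {F\<in>G'. \<rho> F = a})"
    using sum.group[OF _ _ subG, of "\<lambda>_. 1::nat"] by simp
  have fib: "CARD('n word) ^ (2 * card T) * card {F\<in>G'. \<rho> F = a} = card {F\<in>G. \<rho> F = a}" if a: "a \<in> \<rho> ` G" for a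
  proof -
    obtain F0 where F0: "F0 \<in> G" "a = \<rho> F0" using a by blast
    have e1: "{F\<in>G. \<rho> F = a} = {F\<in>Base FP. good2 k FP T F \<and> (\<forall>x\<in>W. F x = F0 x)}"
      unfolding F0(2) \<rho>eq G_def by auto
    have e2: "{F\<in>G'. \<rho> F = a} = {F\<in>Base FP. good2 k FP T F \<and> sat k T F \<and> (\<forall>x\<in>W. F x = F0 x)}"
      unfolding F0(2) \<rho>eq G'_def by auto
    show ?thesis unfolding e1 e2 W_def by (rule fiber_counts) (use F0 in \<open>auto simp: G_def\<close>)
  qed
  have "CARD('n word) ^ (2 * card T) * card G' = (\<Sum>a\<in>\<rho> ` G. CARD('n word) ^ (2 * card T) * card {F\<in>G'. \<rho> F = a})"
    unfolding cG' by (simp add: sum_distrib_left)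
  also have "\<dots> = card G" unfolding cG by (intro sum.cong refl fib)
  finally show ?thesis unfolding G_def G'_def .
qed

definition pinj :: "'n trip set \<Rightarrow> bool" where
  "pinj T \<longleftrightarrow> (\<forall>t\<in>T. \<forall>t'\<in>T. fst t = fst t' \<longrightarrow> (fst (snd t) = fst (snd t') \<or> snd (snd t) = snd (snd t')) \<longrightarrow> t = t')"

lemma xor_left_inj: "xor (a::'n::len word) x = xor a y \<longleftrightarrow> x = y"
  by (metis xor_cancel_left)

lemma xor_right_inj: "xor x (a::'n::len word) = xor y a \<longleftrightarrow> x = y"
  by (metis xor_left_inj xor.commute)

lemma B2_empty:
  assumes gd: "good (FP, T) k" and pj: "pinj T" and t: "t \<in> T" "t' \<in> T" "ordT t < ordT t'"
    and e: "p1 k t = p1 k t'"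
  shows "c2 k t \<noteq> c2 k t'"
proof
  assume c: "c2 k t = c2 k t'"
  obtain d L R S U where tt: "t = (d, (L, R), (S, U))" by (cases t) auto
  obtain d' L' R' S' U' where tt': "t' = (d', (L', R'), (S', U'))" by (cases t') auto
  have "fst t = fst t'" using gd t e unfolding good_def by auto
  then have dd: "d' = d" using tt tt' by simp
  have "R = R'" using e unfolding p1_def tt tt' dd by (simp add: xor_left_inj)
  moreover have "L = L'" using c unfolding c2_def tt tt' dd by (simp add: xor_left_inj)
  ultimately have "fst (snd t) = fst (snd t')" using tt tt' by simp
  then have "t = t'" using pj t(1,2) \<open>fst t = fst t'\<close> unfolding pinj_def by blast
  then show False using t(3) by simp
qed

lemma B3_empty:
  assumes gd: "good (FP, T) k" and pj: "pinj T" and t: "t \<in> T" "t' \<in> T" "ordT t < ordT t'"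
    and e: "p4 k t = p4 k t'"
  shows "c3 k t \<noteq> c3 k t'"
proof
  assume c: "c3 k t = c3 k t'"
  obtain d L R S U where tt: "t = (d, (L, R), (S, U))" by (cases t) auto
  obtain d' L' R' S' U' where tt': "t' = (d', (L', R'), (S', U'))" by (cases t') auto
  have "fst t = fst t'" using gd t e unfolding good_def by auto
  then have dd: "d' = d" using tt tt' by simp
  have "S = S'" using e unfolding p4_def tt tt' dd by (simp add: xor_left_inj)
  moreover have "U = U'" using c unfolding c3_def tt tt' dd by (simp add: xor_left_inj)
  ultimately have "snd (snd t) = snd (snd t')" using tt tt' by simp
  then have "t = t'" using pj t(1,2) \<open>fst t = fst t'\<close> unfolding pinj_def by blast
  then show False using t(3) by simp
qed


lemma bad_bound:
  assumes gd: "good (FP, T) k" and ij: "inj_on fst FP" and pj: "pinj T"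
  shows "CARD('n word) * card {F\<in>Base FP. \<not> good2 k FP T F}
     \<le> (2 * card T * card FP + 6 * card T ^ 2) * card (Base FP)"
proof -
  define N where "N = CARD('n word)"
  define W where "W = Wset k FP T"
  define B where "B = Base FP"
  define Pr where "Pr = {p\<in>T \<times> T. ordT (fst p) < ordT (snd p)}"
  define E where "E = (\<lambda>(t, w). {F\<in>B. p2 k F t = w} \<union> {F\<in>B. p3 k F t = w})"
  define D where "D = (\<lambda>(t, t'). {F\<in>B. p2 k F t = p2 k F t'} \<union> {F\<in>B. p3 k F t = p3 k F t'})"
  define C where "C = (\<lambda>(t, t'). {F\<in>B. p2 k F t = p3 k F t'})"
  have g1: "p1 k t \<notin> fst ` FP" "p4 k t \<notin> fst ` FP" if "t \<in> T" for t
    using gd that unfolding good_def by force+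
  have sub: "{F\<in>B. \<not> good2 k FP T F} \<subseteq> (\<Union>i\<in>T \<times> W. E i) \<union> (\<Union>i\<in>Pr. D i) \<union> (\<Union>i\<in>T \<times> T. C i)"
  proof
    fix F assume F: "F \<in> {F\<in>B. \<not> good2 k FP T F}"
    then have FB: "F \<in> B" and ng: "\<not> good2 k FP T F" by auto
    show "F \<in> (\<Union>i\<in>T \<times> W. E i) \<union> (\<Union>i\<in>Pr. D i) \<union> (\<Union>i\<in>T \<times> T. C i)"
    proof (cases "\<exists>t\<in>T. \<exists>w\<in>W. p2 k F t = w \<or> p3 k F t = w")
      case True
      then obtain t w where "t \<in> T" "w \<in> W" "p2 k F t = w \<or> p3 k F t = w" by blast
      then have "F \<in> E (t,w)" "(t,w) \<in> T \<times> W" using FB unfolding E_def by auto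
      then show ?thesis by blast
    next
      case F1: False
      show ?thesis
      proof (cases "\<exists>t\<in>T. \<exists>t'\<in>T. ordT t < ordT t' \<and> (p2 k F t = p2 k F t' \<or> p3 k F t = p3 k F t')")
        case True
        then obtain t t' where "t \<in> T" "t' \<in> T" "ordT t < ordT t'" "p2 k F t = p2 k F t' \<or> p3 k F t = p3 k F t'" by blast
        then have "F \<in> D (t,t')" "(t,t') \<in> Pr" using FB unfolding D_def Pr_def by auto
        then show ?thesis by blast
      next
        case F2: False
        have "\<exists>t\<in>T. \<exists>t'\<in>T. p2 k F t = p3 k F t'"
          using ng F1 F2 unfolding good2_def W_def[symmetric] by blast
        then obtain t t' where "t \<in> T" "t' \<in> T" "p2 k F t = p3 k F t'" by blast
        then have "F \<in> C (t,t')" "(t,t') \<in> T \<times> T" using FB unfolding C_def by auto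
        then show ?thesis by blast
      qed
    qed
  qed
  have pt: "card {F\<in>B. F u = c} * N = card B" if "u \<notin> fst ` FP" for u c
    unfolding B_def N_def by (rule card_Base_pt[OF ij that])
  have rel: "card {F\<in>B. F u = h (F u')} * N = card B" if "u \<notin> fst ` FP" "u' \<notin> fst ` FP" "u \<noteq> u'" for u u' h
    unfolding B_def N_def by (rule card_Base_rel[OF ij that])
  have cE: "N * card (E i) \<le> 2 * card B" if "i \<in> T \<times> W" for i
  proof -
    obtain t w where i: "i = (t,w)" by (cases i)
    have t: "t \<in> T" using that i by auto
    have e2: "{F\<in>B. p2 k F t = w} = {F\<in>B. F (p1 k t) = xor (c2 k t) w}"
      unfolding p2_def by (simp add: xor_solve)
    have e3: "{F\<in>B. p3 k F t = w} = {F\<in>B. F (p4 k t) = xor (c3 k t) w}"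
      unfolding p3_def by (simp add: xor_solve)
    have "N * card (E i) \<le> N * (card {F\<in>B. p2 k F t = w} + card {F\<in>B. p3 k F t = w})"
      unfolding E_def i by (simp add: card_Un_le)
    also have "\<dots> = card {F\<in>B. F (p1 k t) = xor (c2 k t) w} * N + card {F\<in>B. F (p4 k t) = xor (c3 k t) w} * N"
      unfolding e2 e3 by (simp add: algebra_simps)
    also have "\<dots> = 2 * card B" using pt[OF g1(1)[OF t]] pt[OF g1(2)[OF t]] by simp
    finally show ?thesis .
  qed
  have cD: "N * card (D i) \<le> 2 * card B" if "i \<in> Pr" for i
  proof -
    obtain t t' where i: "i = (t,t')" by (cases i)
    have t: "t \<in> T" "t' \<in> T" "ordT t < ordT t'" using that i unfolding Pr_def by auto
    have a2: "N * card {F\<in>B. p2 k F t = p2 k F t'} \<le> card B"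
    proof (cases "p1 k t = p1 k t'")
      case True
      have "{F\<in>B. p2 k F t = p2 k F t'} = {}"
        using B2_empty[OF gd pj t True] True unfolding p2_def by (auto simp: xor_right_inj)
      then show ?thesis by (simp only: card.empty mult_0_right zero_le)
    next
      case False
      have "{F\<in>B. p2 k F t = p2 k F t'} = {F\<in>B. F (p1 k t) = xor (xor (c2 k t) (c2 k t')) (F (p1 k t'))}"
        unfolding p2_def by (simp add: xor_solve2)
      then show ?thesis using rel[OF g1(1)[OF t(1)] g1(1)[OF t(2)] False] by (simp add: mult.commute)
    qed
    have a3: "N * card {F\<in>B. p3 k F t = p3 k F t'} \<le> card B"
    proof (cases "p4 k t = p4 k t'")
      case True
      have "{F\<in>B. p3 k F t = p3 k F t'} = {}"
        using B3_empty[OF gd pj t True] True unfolding p3_def by (auto simp: xor_right_inj)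
      then show ?thesis by (simp only: card.empty mult_0_right zero_le)
    next
      case False
      have "{F\<in>B. p3 k F t = p3 k F t'} = {F\<in>B. F (p4 k t) = xor (xor (c3 k t) (c3 k t')) (F (p4 k t'))}"
        unfolding p3_def by (simp add: xor_solve2)
      then show ?thesis using rel[OF g1(2)[OF t(1)] g1(2)[OF t(2)] False] by (simp add: mult.commute)
    qed
    have "N * card (D i) \<le> N * (card {F\<in>B. p2 k F t = p2 k F t'} + card {F\<in>B. p3 k F t = p3 k F t'})"
      unfolding D_def i by (simp add: card_Un_le)
    also have "\<dots> \<le> 2 * card B" using a2 a3 by (simp add: algebra_simps)
    finally show ?thesis .
  qed
  have cC: "N * card (C i) \<le> card B" if "i \<in> T \<times> T" for i
  proof -
    obtain t t' where i: "i = (t,t')" by (cases i)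
    have t: "t \<in> T" "t' \<in> T" using that i by auto
    have ne: "p1 k t \<noteq> p4 k t'" using gd t unfolding good_def by auto
    have "C i = {F\<in>B. F (p1 k t) = xor (xor (c2 k t) (c3 k t')) (F (p4 k t'))}"
      unfolding C_def i p2_def p3_def by (simp add: xor_solve2)
    then show ?thesis using rel[OF g1(1)[OF t(1)] g1(2)[OF t(2)] ne] by (simp add: mult.commute)
  qed
  have "N * card {F\<in>B. \<not> good2 k FP T F} \<le> N * card ((\<Union>i\<in>T \<times> W. E i) \<union> (\<Union>i\<in>Pr. D i) \<union> (\<Union>i\<in>T \<times> T. C i))"
    using sub by (intro mult_le_mono2 card_mono) auto
  also have "\<dots> \<le> N * (card (\<Union>i\<in>T \<times> W. E i) + card (\<Union>i\<in>Pr. D i) + card (\<Union>i\<in>T \<times> T. C i))"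
  proof -
    let ?X = "\<Union>i\<in>T \<times> W. E i" and ?Y = "\<Union>i\<in>Pr. D i" and ?Z = "\<Union>i\<in>T \<times> T. C i"
    have "card (?X \<union> ?Y \<union> ?Z) \<le> card ?X + card ?Y + card ?Z"
      using card_Un_le[of "?X \<union> ?Y" ?Z] card_Un_le[of ?X ?Y] by linarith
    then show ?thesis by (rule mult_le_mono2)
  qed
  also have "\<dots> \<le> N * ((\<Sum>i\<in>T \<times> W. card (E i)) + (\<Sum>i\<in>Pr. card (D i)) + (\<Sum>i\<in>T \<times> T. card (C i)))"
    by (intro mult_le_mono2 add_mono card_UN_le) auto
  also have "\<dots> = (\<Sum>i\<in>T \<times> W. N * card (E i)) + (\<Sum>i\<in>Pr. N * card (D i)) + (\<Sum>i\<in>T \<times> T. N * card (C i))"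
    by (simp add: sum_distrib_left algebra_simps)
  also have "\<dots> \<le> (\<Sum>i\<in>T \<times> W. 2 * card B) + (\<Sum>i\<in>Pr. 2 * card B) + (\<Sum>i\<in>T \<times> T. card B)"
    by (intro add_mono sum_mono cE cD cC) auto
  also have "\<dots> = 2 * card T * card W * card B + 2 * card Pr * card B + card T ^ 2 * card B"
    by (simp add: card_cartesian_product power2_eq_square)
  also have "\<dots> \<le> (2 * card T * card FP + 6 * card T ^ 2) * card B"
  proof -
    have cW: "card W \<le> card FP + 2 * card T"
    proof -
      have "card W \<le> card (fst ` FP) + card (p1 k ` T) + card (p4 k ` T)"
        unfolding W_def Wset_def
        using card_Un_le[of "fst ` FP \<union> p1 k ` T" "p4 k ` T"] card_Un_le[of "fst ` FP" "p1 k ` T"] by linarith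
      also have "\<dots> \<le> card FP + card T + card T" by (intro add_mono card_image_le) auto
      finally show ?thesis by simp
    qed
    have cP: "2 * card Pr \<le> card T ^ 2"
      unfolding Pr_def by (rule pairs_card) (auto intro: inj_on_subset[OF inj_ordT])
    have "2 * card T * card W \<le> 2 * card T * (card FP + 2 * card T)" using cW by simp
    then have "2 * card T * card W + 2 * card Pr + card T ^ 2 \<le> 2 * card T * card FP + 6 * card T ^ 2"
      using cP by (simp add: algebra_simps power2_eq_square)
    then have "(2 * card T * card W + 2 * card Pr + card T ^ 2) * card B \<le> (2 * card T * card FP + 6 * card T ^ 2) * card B"
      by (rule mult_le_mono1)
    then show ?thesis by (simp add: algebra_simps)
  qed
  finally show ?thesis unfolding N_def B_def .
qed

end


lemma prod_one_minus_ge: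
  fixes a :: "nat \<Rightarrow> real"
  assumes "\<And>i. i < c \<Longrightarrow> 0 \<le> a i \<and> a i \<le> 1"
  shows "1 - (\<Sum>i<c. a i) \<le> (\<Prod>i<c. 1 - a i)"
  using assms
proof (induction c)
  case 0 then show ?case by simp
next
  case (Suc c)
  have ih: "1 - (\<Sum>i<c. a i) \<le> (\<Prod>i<c. 1 - a i)" using Suc by auto
  have ac: "0 \<le> a c" "a c \<le> 1" using Suc.prems[of c] by auto
  have S0: "0 \<le> (\<Sum>i<c. a i)" using Suc.prems by (intro sum_nonneg) auto
  have "1 - (\<Sum>i<Suc c. a i) \<le> (1 - (\<Sum>i<c. a i)) * (1 - a c)"
    using S0 ac by (simp add: algebra_simps)
  also have "\<dots> \<le> (\<Prod>i<c. 1 - a i) * (1 - a c)"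
    using ih ac by (intro mult_right_mono) auto
  finally show ?case by simp
qed

lemma falling_ge:
  fixes M c :: nat
  assumes "c \<le> M" "0 < M"
  shows "real M ^ c * (1 - real c ^ 2 / real M) \<le> real (\<Prod>i<c. (M - i))"
proof -
  have e: "real (\<Prod>i<c. (M - i)) = real M ^ c * (\<Prod>i<c. 1 - real i / real M)"
  proof -
    have "real (\<Prod>i<c. (M - i)) = (\<Prod>i<c. real M * (1 - real i / real M))"
      unfolding of_nat_prod using assms by (intro prod.cong refl) (auto simp: of_nat_diff field_simps)
    also have "\<dots> = real M ^ c * (\<Prod>i<c. 1 - real i / real M)"
      by (simp add: prod.distrib)
    finally show ?thesis .
  qed
  have "1 - (\<Sum>i<c. real i / real M) \<le> (\<Prod>i<c. 1 - real i / real M)"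
    using assms by (intro prod_one_minus_ge) auto
  moreover have "(\<Sum>i<c. real i / real M) \<le> real c ^ 2 / real M"
  proof -
    have "(\<Sum>i<c. real i / real M) \<le> (\<Sum>i<c. real c / real M)"
      using assms by (intro sum_mono divide_right_mono) auto
    also have "\<dots> = real c ^ 2 / real M" by (simp add: power2_eq_square)
    finally show ?thesis .
  qed
  ultimately have "1 - real c ^ 2 / real M \<le> (\<Prod>i<c. 1 - real i / real M)" by linarith
  then show ?thesis unfolding e by (intro mult_left_mono) auto
qed

context KS
begin

definition shiftT :: "'n word \<Rightarrow> 'n trip set \<Rightarrow> 'n trip set" where
  "shiftT k T = (\<lambda>t. (xor k (fst t), snd t)) ` T"

lemma real_leaf:
  fixes FP :: "('n word \<times> 'n word) set" and T :: "'n trip set"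
  assumes gd: "good (FP, T) k" and cf: "card FP \<le> qf" and ce: "card T \<le> qe"
  defines "eps \<equiv> (2 * real qe * real qf + 7 * real qe ^ 2) / real CARD('n word)"
  shows "(1 - eps) * real (card (Cset (shiftT k T))) * real (card (Base FP))
     \<le> real (card (ICset :: ('n word \<Rightarrow> 'n blk \<Rightarrow> 'n blk) set)) * real (card {F. consO F (\<lambda>d. KAF F (xor k d)) (FP, T)})"
proof -
  define N where "N = CARD('n word)"
  define M where "M = CARD('n blk)"
  define c where "c = card T"
  define cC where "cC = card (Cset (shiftT k T))"
  define cB where "cB = card (Base FP)"
  define cI where "cI = card (ICset :: ('n word \<Rightarrow> 'n blk \<Rightarrow> 'n blk) set)"
  define cR where "cR = card {F. consO F (\<lambda>d. KAF F (xor k d)) (FP, T)}"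
  have N0: "0 < N" unfolding N_def by simp
  have MN: "M = N * N" unfolding M_def N_def by simp
  have RHS0: "0 \<le> real cI * real cR" by simp
  show ?thesis
  proof (cases "eps < 1 \<and> cC \<noteq> 0 \<and> cB \<noteq> 0")
    case False
    then have "(1 - eps) * real cC * real cB \<le> 0"
      by (auto simp: mult_nonpos_nonneg mult_nonneg_nonpos)
    then show ?thesis using RHS0 unfolding cC_def cB_def cI_def cR_def by linarith
  next
    case True
    then have eps1: "eps < 1" and cC0: "cC \<noteq> 0" and cB0: "cB \<noteq> 0" by auto
    obtain IC where IC: "IC \<in> Cset (shiftT k T)" using cC0 unfolding cC_def by fastforce
    obtain F0 where F0: "F0 \<in> Base FP" using cB0 unfolding cB_def by fastforce
    have ij: "inj_on fst FP"
    proof (rule inj_onI)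
      fix p q assume pq: "p \<in> FP" "q \<in> FP" "fst p = fst q"
      have "F0 (fst p) = snd p" "F0 (fst q) = snd q" using F0 pq(1,2) unfolding Base_def by auto
      then have "snd p = snd q" using pq(3) by simp
      then show "p = q" using pq(3) by (simp add: prod_eq_iff)
    qed
    have pj: "pinj T" unfolding pinj_def
    proof (intro ballI impI)
      fix t t' assume t: "t \<in> T" "t' \<in> T" and d: "fst t = fst t'"
        and xy: "fst (snd t) = fst (snd t') \<or> snd (snd t) = snd (snd t')"
      have b: "bij (IC (xor k (fst t)))" using IC unfolding Cset_def ICset_def by auto
      have c1: "IC (xor k (fst t)) (fst (snd t)) = snd (snd t)"
        using IC t(1) unfolding Cset_def shiftT_def by auto
      have c2: "IC (xor k (fst t)) (fst (snd t')) = snd (snd t')"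
        using IC t(2) d unfolding Cset_def shiftT_def by fastforce
      have x: "fst (snd t) = fst (snd t')"
        using xy
      proof
        assume "snd (snd t) = snd (snd t')"
        then have "IC (xor k (fst t)) (fst (snd t)) = IC (xor k (fst t)) (fst (snd t'))" using c1 c2 by simp
        then show ?thesis using b by (simp add: bij_is_inj inj_eq)
      qed
      then have "fst (snd t) = fst (snd t') \<and> snd (snd t) = snd (snd t')" using c1 c2 by simp
      then show "t = t'" using d by (simp add: prod_eq_iff)
    qed
    have cTk: "card (shiftT k T) = c"
      unfolding shiftT_def c_def by (rule card_image) (auto simp: inj_on_def prod_eq_iff xor_left_inj)
    have qeN: "7 * real qe ^ 2 < real N"
    proof -
      have "7 * real qe ^ 2 / real N \<le> eps" unfolding eps_def N_def
        by (intro divide_right_mono) auto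
      then have "7 * real qe ^ 2 / real N < 1" using eps1 by linarith
      then show ?thesis using N0 by (simp add: divide_less_eq)
    qed
    have cN: "c < N"
    proof -
      have "real c \<le> real qe" using ce unfolding c_def by simp
      have "c \<le> c * c" by (rule le_square)
      then have "real c \<le> real (c * c)" by (simp only: of_nat_le_iff)
      then have "real c \<le> real c ^ 2" by (simp add: power2_eq_square)
      moreover have "real c ^ 2 \<le> real qe ^ 2" using ce unfolding c_def by (simp add: power_mono)
      ultimately have "real c < real N" using qeN by linarith
      then show ?thesis by simp
    qed
    have "N \<le> N * N" using N0 by simp
    then have cM: "c \<le> M" using cN unfolding MN by linarith
        have icl: "cC * (\<Prod>i<c. (M - i)) \<le> cI"
      using ICL[of "shiftT k T"] unfolding cC_def cI_def M_def cTk by simp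
    define P where "P = real (\<Prod>i<c. (M - i))"
    have "0 < (\<Prod>i<c. (M - i))" using cM by (intro prod_pos) auto
    then have P0: "0 < P" unfolding P_def by (simp only: of_nat_0_less_iff)
    have Pge: "real M ^ c * (1 - real c ^ 2 / real M) \<le> P"
      unfolding P_def by (rule falling_ge[OF cM]) (simp add: M_def)
        have sub: "{F\<in>Base FP. good2 k FP T F \<and> sat k T F} \<subseteq> {F. consO F (\<lambda>d. KAF F (xor k d)) (FP, T)}"
    proof
      fix F assume F: "F \<in> {F\<in>Base FP. good2 k FP T F \<and> sat k T F}"
      have "\<forall>t\<in>T. KAF F (xor k (fst t)) (fst (snd t)) = snd (snd t)"
        using F KAF_sol unfolding sat_def by blast
      then show "F \<in> {F. consO F (\<lambda>d. KAF F (xor k d)) (FP, T)}"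
        using F unfolding consO_def Base_def by auto
    qed
    have gc: "N ^ (2 * c) * card {F\<in>Base FP. good2 k FP T F \<and> sat k T F} = card {F\<in>Base FP. good2 k FP T F}"
      unfolding N_def c_def by (rule G_count)
    have bb: "N * card {F\<in>Base FP. \<not> good2 k FP T F} \<le> (2 * c * card FP + 6 * c ^ 2) * cB"
      unfolding N_def c_def cB_def by (rule bad_bound[OF gd ij pj])
    have split: "card {F\<in>Base FP. good2 k FP T F} + card {F\<in>Base FP. \<not> good2 k FP T F} = cB"
      unfolding cB_def by (subst card_Un_disjoint[symmetric]) (auto intro: arg_cong[where f=card])
    define e' where "e' = (2 * real c * real (card FP) + 6 * real c ^ 2) / real N"
    have G_ge: "(1 - e') * real cB \<le> real (card {F\<in>Base FP. good2 k FP T F})"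
    proof -
      have "real N * real (card {F\<in>Base FP. \<not> good2 k FP T F}) \<le> (2 * real c * real (card FP) + 6 * real c ^ 2) * real cB"
      proof -
        have "real (N * card {F\<in>Base FP. \<not> good2 k FP T F}) \<le> real ((2 * c * card FP + 6 * c ^ 2) * cB)"
          by (simp only: of_nat_le_iff) (rule bb)
        then show ?thesis by simp
      qed
      then have "real (card {F\<in>Base FP. \<not> good2 k FP T F}) \<le> e' * real cB"
        unfolding e'_def using N0 by (simp add: field_simps)
      then show ?thesis using split by (simp add: algebra_simps)
    qed
    have R_ge: "(1 - e') * real cB \<le> real N ^ (2 * c) * real cR"
    proof -
      have "card {F\<in>Base FP. good2 k FP T F \<and> sat k T F} \<le> cR"
        unfolding cR_def by (rule card_mono[OF _ sub]) simp
      then have "N ^ (2 * c) * card {F\<in>Base FP. good2 k FP T F \<and> sat k T F} \<le> N ^ (2 * c) * cR"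
        by (rule mult_le_mono2)
      then have "card {F\<in>Base FP. good2 k FP T F} \<le> N ^ (2 * c) * cR" using gc by simp
      then have "real (card {F\<in>Base FP. good2 k FP T F}) \<le> real (N ^ (2 * c) * cR)" by (simp only: of_nat_le_iff)
      then have "real (card {F\<in>Base FP. good2 k FP T F}) \<le> real N ^ (2 * c) * real cR" by simp
      then show ?thesis using G_ge by linarith
    qed
    define \<eta> where "\<eta> = real c ^ 2 / real M"
    have e'0: "0 \<le> e'" unfolding e'_def by simp
    have \<eta>0: "0 \<le> \<eta>" unfolding \<eta>_def by simp
    have sum_le: "e' + \<eta> \<le> eps"
    proof -
      have "\<eta> \<le> real c ^ 2 / real N" unfolding \<eta>_def MN using N0 
        by (intro divide_left_mono) (auto simp: mult_le_cancel_left1)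
      then have "e' + \<eta> \<le> (2 * real c * real (card FP) + 7 * real c ^ 2) / real N"
        unfolding e'_def by (simp add: add_divide_distrib)
      also have "\<dots> \<le> eps" unfolding eps_def N_def[symmetric]
        using cf ce unfolding c_def using N0
        by (intro divide_right_mono add_mono mult_mono power_mono) auto
      finally show ?thesis .
    qed
    have e'1: "e' \<le> 1" using sum_le eps1 \<eta>0 by linarith
    have MNc: "real M ^ c = real N ^ (2 * c)" unfolding MN by (simp add: power_mult power2_eq_square)
    have key: "(1 - eps) * real cB \<le> P * real cR"
    proof -
      have "(1 - e') * (1 - \<eta>) = 1 - e' - \<eta> + e' * \<eta>" by (simp add: algebra_simps)
      moreover have "0 \<le> e' * \<eta>" using e'0 \<eta>0 by simp
      ultimately have "(1 - eps) \<le> (1 - e') * (1 - \<eta>)" using sum_le by linarith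
      then have "(1 - eps) * real cB \<le> ((1 - e') * (1 - \<eta>)) * real cB"
        by (intro mult_right_mono) auto
      also have "\<dots> = (1 - \<eta>) * ((1 - e') * real cB)" by simp
      also have "\<dots> \<le> (1 - \<eta>) * (real N ^ (2 * c) * real cR)"
        using R_ge \<eta>0 eps1 sum_le e'0 by (intro mult_left_mono) auto
      also have "\<dots> = real M ^ c * (1 - \<eta>) * real cR" unfolding MNc by simp
      also have "\<dots> \<le> P * real cR" using Pge unfolding \<eta>_def by (intro mult_right_mono) auto
      finally show ?thesis .
    qed
    have "(1 - eps) * real cC * real cB = real cC * ((1 - eps) * real cB)" by simp
    also have "\<dots> \<le> real cC * (P * real cR)" using key by (intro mult_left_mono) auto
    also have "\<dots> = (real cC * P) * real cR" by simp
    also have "\<dots> \<le> real cI * real cR"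
    proof -
      have "real (cC * (\<Prod>i<c. (M - i))) \<le> real cI" by (simp only: of_nat_le_iff) (rule icl)
      then have "real cC * P \<le> real cI" unfolding P_def by (simp only: of_nat_mult)
      then show ?thesis by (intro mult_right_mono) auto
    qed
    finally show ?thesis unfolding cC_def cB_def cI_def cR_def .
  qed
qed

end


lemma bij_xor2: "bij (xor2 c :: 'n::len word \<times> 'n word \<Rightarrow> _)"
  by (rule o_bij[of "xor2 c"]) (auto simp: fun_eq_iff xor2_def xor_cancel_left)

lemma bij_Psi: "bij (Psi F \<kappa> :: 'n::len word \<times> 'n word \<Rightarrow> _)"
proof (rule o_bij[of "\<lambda>W. (xor (snd W) (F (xor \<kappa> (fst W))), fst W)"])
  show "(\<lambda>W. (xor (snd W) (F (xor \<kappa> (fst W))), fst W)) \<circ> Psi F \<kappa> = id"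
    by (auto simp: fun_eq_iff Psi_def xor.assoc xor.commute xor.left_commute xor_cancel_left)
  show "Psi F \<kappa> \<circ> (\<lambda>W. (xor (snd W) (F (xor \<kappa> (fst W))), fst W)) = id"
    by (auto simp: fun_eq_iff Psi_def xor.assoc xor.commute xor.left_commute xor_cancel_left)
qed

primrec negd :: "('a, 'b) dist \<Rightarrow> ('a, 'b) dist" where
  "negd (Out b) = Out (\<not> b)"
| "negd (Coin g) = Coin (\<lambda>c. negd (g c))"
| "negd (QF x g) = QF x (\<lambda>y. negd (g y))"
| "negd (QE d x g) = QE d x (\<lambda>y. negd (g y))"
| "negd (QD d x g) = QD d x (\<lambda>y. negd (g y))"

lemma bounded_negd: "bounded (negd A) a b = bounded A a b"
  by (induction A arbitrary: a b) auto

lemma pmf_run_negd: "pmf (run (negd A) F E D) True = 1 - pmf (run A F E D) True"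
proof -
  have "pmf (run (negd A) F E D) True = pmf (run A F E D) False"
  proof (induction A)
    case (Coin g)
    then show ?case by (simp add: pmf_bind integral_pmf_of_set UNIV_bool)
  qed (simp_all add: pmf_return indicator_def)
  then show ?thesis by (simp add: pmf_False_conv_True)
qed

context KS
begin

lemma bij_KAF: "bij (KAF F \<kappa>)"
proof -
  have "KAF F \<kappa> = xor2 (w2 \<kappa>, w3 \<kappa>) \<circ> Psi F (g4 \<kappa>) \<circ> Psi F (g3 \<kappa>) \<circ> Psi F (g2 \<kappa>) \<circ> Psi F (g1 \<kappa>) \<circ> xor2 (w0 \<kappa>, w1 \<kappa>)"
    by (simp add: fun_eq_iff KAF_def KAFw_def)
  then show ?thesis by (simp add: bij_comp bij_xor2 bij_Psi)
qed

lemma deltas_nonneg: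
  assumes gk: "good_ks w1 w2 g1 g4 \<delta>1 \<delta>2 \<delta>3"
  shows "0 \<le> \<delta>1" "0 \<le> \<delta>2" "0 \<le> \<delta>3"
proof -
  note G = gk[unfolded good_ks_def Let_def]
  have p0: "0 \<le> prk P" for P :: "'n word \<Rightarrow> bool" unfolding prk_def by simp
  have h1: "\<forall>\<Delta> y. prk (\<lambda>k. xor (w1 (xor k \<Delta>)) (g1 (xor k \<Delta>)) = y) \<le> \<delta>1" using G by auto
  then have "prk (\<lambda>k. xor (w1 (xor k 0)) (g1 (xor k 0)) = 0) \<le> \<delta>1" by blast
  then show "0 \<le> \<delta>1" using p0 by (rule order_trans[rotated])
  have h2: "\<forall>\<Delta> \<Delta>'. \<Delta> \<noteq> \<Delta>' \<longrightarrow> (\<forall>y. prk (\<lambda>k. xor (xor (w1 (xor k \<Delta>)) (g1 (xor k \<Delta>))) (xor (w1 (xor k \<Delta>')) (g1 (xor k \<Delta>'))) = y) \<le> \<delta>2)"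
    using G by auto
  have "(0::'n word) \<noteq> 1" by simp
  then have "prk (\<lambda>k. xor (xor (w1 (xor k 0)) (g1 (xor k 0))) (xor (w1 (xor k 1)) (g1 (xor k 1))) = 0) \<le> \<delta>2"
    using h2 by blast
  then show "0 \<le> \<delta>2" using p0 by (rule order_trans[rotated])
  have h3: "\<forall>\<Delta> \<Delta>' y. prk (\<lambda>k. xor (xor (w1 (xor k \<Delta>)) (g1 (xor k \<Delta>))) (xor (w2 (xor k \<Delta>')) (g4 (xor k \<Delta>'))) = y) \<le> \<delta>3"
    using G by auto
  then have "prk (\<lambda>k. xor (xor (w1 (xor k 0)) (g1 (xor k 0))) (xor (w2 (xor k 0)) (g4 (xor k 0))) = 0) \<le> \<delta>3"
    by blast
  then show "0 \<le> \<delta>3" using p0 by (rule order_trans[rotated])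
qed

lemma KBrun:
  fixes qf qe :: nat
  assumes gk: "good_ks w1 w2 g1 g4 \<delta>1 \<delta>2 \<delta>3"
  defines "\<beta> \<equiv> 2 * \<delta>1 * real qe * real qf + (\<delta>2 + \<delta>3) * real qe ^ 2"
  shows "bounded A a b \<Longrightarrow> card (fst s) + a \<le> qf \<Longrightarrow> card (snd s) + b \<le> qe \<Longrightarrow>
    (\<Sum>k\<in>UNIV. evl (\<lambda>s b. if good s k then 0 else 1) A s F E D) \<le> real CARD('n word) * \<beta>"
proof (induction A arbitrary: a b s)
  case (Out bb)
  have d: "0 \<le> \<delta>1" "0 \<le> \<delta>2" "0 \<le> \<delta>3" using deltas_nonneg[OF gk] by auto
  have cf: "real (card (fst s)) \<le> real qf" and ce: "real (card (snd s)) \<le> real qe" using Out by auto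
  have "(\<Sum>k\<in>UNIV. evl (\<lambda>s b. if good s k then 0 else 1) (Out bb) s F E D) = real (card {k. \<not> good s k})"
    by (simp add: sum.If_cases Collect_neg_eq)
  also have "\<dots> \<le> real CARD('n word) *
     (2 * \<delta>1 * real (card (fst s)) * real (card (snd s)) + (\<delta>2 + \<delta>3) * real (card (snd s)) ^ 2)"
    by (rule KB[OF gk])
  also have "\<dots> \<le> real CARD('n word) * \<beta>"
  proof -
    have m1: "real (card (fst s)) * real (card (snd s)) \<le> real qf * real qe"
      using cf ce by (intro mult_mono) auto
    have m2: "real (card (snd s)) ^ 2 \<le> real qe ^ 2" using ce by (intro power_mono) auto
    have "2 * \<delta>1 * (real (card (fst s)) * real (card (snd s))) \<le> 2 * \<delta>1 * (real qf * real qe)"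
      using m1 d by (intro mult_left_mono) auto
    moreover have "(\<delta>2 + \<delta>3) * real (card (snd s)) ^ 2 \<le> (\<delta>2 + \<delta>3) * real qe ^ 2"
      using m2 d by (intro mult_left_mono) auto
    ultimately have "2 * \<delta>1 * real (card (fst s)) * real (card (snd s)) + (\<delta>2 + \<delta>3) * real (card (snd s)) ^ 2 \<le> \<beta>"
      unfolding \<beta>_def by (simp add: algebra_simps)
    then show ?thesis by (intro mult_left_mono) auto
  qed
  finally show ?case .
next
  case (Coin g)
  have b: "bounded (g c) a b" for c using Coin.prems by simp
  note ih = Coin.IH[OF rangeI b Coin.prems(2,3)]
  have "(\<Sum>k\<in>UNIV. evl (\<lambda>s b. if good s k then 0 else 1) (Coin g) s F E D)
     = ((\<Sum>k\<in>UNIV. evl (\<lambda>s b. if good s k then 0 else 1) (g True) s F E D)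
       + (\<Sum>k\<in>UNIV. evl (\<lambda>s b. if good s k then 0 else 1) (g False) s F E D)) / 2"
    unfolding evl.simps sum_divide_distrib[symmetric] sum.distrib ..
  then show ?case using ih[of True] ih[of False] by simp
next
  case (QF x g)
  have a0: "0 < a" and bb: "\<And>y. bounded (g y) (a - 1) b" using QF.prems by auto
  have c1: "card (fst (addF x y s)) + (a - 1) \<le> qf" for y
    using QF.prems(2) a0 by (auto simp: addF_def card_insert_if)
  have c2: "card (snd (addF x y s)) + b \<le> qe" for y using QF.prems(3) by (simp add: addF_def)
  show ?case using QF.IH[OF rangeI bb c1 c2] by simp
next
  case (QE d X g)
  have a0: "0 < b" and bb: "\<And>y. bounded (g y) a (b - 1)" using QE.prems by auto
  have c2: "card (snd (addT (d,X,y) s)) + (b - 1) \<le> qe" for y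
    using QE.prems(3) a0 by (auto simp: addT_def card_insert_if)
  have c1: "card (fst (addT (d,X,y) s)) + a \<le> qf" for y using QE.prems(2) by (simp add: addT_def)
  show ?case using QE.IH[OF rangeI bb c1 c2] by simp
next
  case (QD d Y g)
  have a0: "0 < b" and bb: "\<And>y. bounded (g y) a (b - 1)" using QD.prems by auto
  have c2: "card (snd (addT (d,y,Y) s)) + (b - 1) \<le> qe" for y
    using QD.prems(3) a0 by (auto simp: addT_def card_insert_if)
  have c1: "card (fst (addT (d,y,Y) s)) + a \<le> qf" for y using QD.prems(2) by (simp add: addT_def)
  show ?case using QD.IH[OF rangeI bb c1 c2] by simp
qed

end


lemma ICset_ne: "(\<lambda>_. id) \<in> ICset" by (simp add: ICset_def)

lemma bij_shift_IC: "bij_betw (\<lambda>IC d. IC (xor k d)) (ICset :: ('n::len word \<Rightarrow> 'b \<Rightarrow> 'b) set) ICset"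
  by (rule bij_betw_byWitness[where f' = "\<lambda>IC d. IC (xor k d)"])
     (auto simp: ICset_def xor_cancel_left)

lemma sum_prod_UNIV:
  fixes f :: "'a::finite \<times> 'b::finite \<Rightarrow> real"
  shows "(\<Sum>u\<in>UNIV. f u) = (\<Sum>x\<in>UNIV. \<Sum>y\<in>UNIV. f (x,y))"
  by (simp add: sum.cartesian_product UNIV_Times_UNIV[symmetric] del: UNIV_Times_UNIV)

lemma card_UNIV_pair: "card (UNIV :: ('a::finite \<times> 'b::finite) set) = CARD('a) * CARD('b)"
  by (simp add: card_cartesian_product UNIV_Times_UNIV[symmetric] del: UNIV_Times_UNIV)

lemma SS_empty: "SS Om Fo Eo Do H A ({},{}) = (\<Sum>u\<in>Om. evl (H u) A ({},{}) (Fo u) (Eo u) (Do u))"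
  by (simp add: SS_def consO_def)

context KS
begin

definition PRr :: "('n word, 'n blk) dist \<Rightarrow> 'n word \<times> ('n word \<Rightarrow> 'n word) \<Rightarrow> real" where
  "PRr A u = pmf (run A (snd u) (\<lambda>d. KAF (snd u) (xor (fst u) d)) (\<lambda>d. inv (KAF (snd u) (xor (fst u) d)))) True"

definition PIr :: "('n word, 'n blk) dist \<Rightarrow> 'n word \<times> ('n word \<Rightarrow> 'n blk \<Rightarrow> 'n blk) \<times> ('n word \<Rightarrow> 'n word) \<Rightarrow> real" where
  "PIr A u = pmf (run A (snd (snd u)) (\<lambda>d. fst (snd u) (xor (fst u) d)) (\<lambda>d. inv (fst (snd u) (xor (fst u) d)))) True"

lemma pmf_real_sum:
  "pmf (real_world w0 w1 w2 w3 [g1, g2, g3, g4] A) True =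
   (\<Sum>u\<in>UNIV. PRr A u) / real (card (UNIV :: ('n word \<times> ('n word \<Rightarrow> 'n word)) set))"
proof -
  have k: "KAF F = KAFw F w0 w1 w2 w3 [g1, g2, g3, g4]" for F by (simp add: fun_eq_iff KAF_def)
  have "pmf (real_world w0 w1 w2 w3 [g1, g2, g3, g4] A) True =
     (\<Sum>k\<in>UNIV. \<Sum>F\<in>UNIV. PRr A (k,F)) / (real CARD('n word) * real CARD('n word \<Rightarrow> 'n word))"
    unfolding real_world_def PRr_def k by (simp add: pmf_bind integral_pmf_of_set)
  also have "\<dots> = (\<Sum>u\<in>UNIV. PRr A u) / real (card (UNIV :: ('n word \<times> ('n word \<Rightarrow> 'n word)) set))"
    by (simp add: sum_prod_UNIV card_UNIV_pair)
  finally show ?thesis .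
qed


lemma pmf_ideal_sum:
  "pmf (ideal_world A) True =
   (\<Sum>k\<in>UNIV. \<Sum>IC\<in>ICset. \<Sum>F\<in>UNIV. PIr A (k,IC,F))
     / (real CARD('n word) * (real (card (ICset :: ('n word \<Rightarrow> 'n blk \<Rightarrow> 'n blk) set)) * real CARD('n word \<Rightarrow> 'n word)))"
proof -
  have eq: "{IC :: 'n word \<Rightarrow> 'n blk \<Rightarrow> 'n blk. \<forall>key. bij (IC key)} = ICset" by (simp add: ICset_def)
  have ne: "ICset \<noteq> {}" using ICset_ne by blast
  have fin: "finite (ICset :: ('n word \<Rightarrow> 'n blk \<Rightarrow> 'n blk) set)" by simp
  show ?thesis
    unfolding ideal_world_def PIr_def eq
    by (simp add: pmf_bind integral_pmf_of_set integral_pmf_of_set[OF ne fin] sum_divide_distrib[symmetric] divide_divide_eq_left mult.commute mult.left_commute)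
qed

lemma sum_OI: "(\<Sum>u\<in>UNIV \<times> (ICset \<times> UNIV). f u) = (\<Sum>k\<in>UNIV. \<Sum>IC\<in>ICset. \<Sum>F\<in>UNIV. f (k,IC,F))"
  by (simp add: sum.cartesian_product)

lemma card_OI: "card (UNIV \<times> (ICset \<times> UNIV) :: ('n word \<times> ('n word \<Rightarrow> 'n blk \<Rightarrow> 'n blk) \<times> ('n word \<Rightarrow> 'n word)) set)
   = CARD('n word) * (card (ICset :: ('n word \<Rightarrow> 'n blk \<Rightarrow> 'n blk) set) * CARD('n word \<Rightarrow> 'n word))"
  by (simp add: card_cartesian_product)


lemma main_bound:
  fixes qf qe :: nat
  assumes gk: "good_ks w1 w2 g1 g4 \<delta>1 \<delta>2 \<delta>3" and bA: "bounded A qf qe"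
  shows "pmf (ideal_world A) True - pmf (real_world w0 w1 w2 w3 [g1, g2, g3, g4] A) True
    \<le> (2 * real qe * real qf + 7 * real qe ^ 2) / real CARD('n word)
      + (2 * \<delta>1 * real qe * real qf + (\<delta>2 + \<delta>3) * real qe ^ 2)"
proof -
  define eps where "eps = (2 * real qe * real qf + 7 * real qe ^ 2) / real CARD('n word)"
  define \<beta> where "\<beta> = 2 * \<delta>1 * real qe * real qf + (\<delta>2 + \<delta>3) * real qe ^ 2"
  define OR where "OR = (UNIV :: ('n word \<times> ('n word \<Rightarrow> 'n word)) set)"
  define FR where "FR = (\<lambda>u :: 'n word \<times> ('n word \<Rightarrow> 'n word). snd u)"
  define ER where "ER = (\<lambda>(u :: 'n word \<times> ('n word \<Rightarrow> 'n word)) d. KAF (snd u) (xor (fst u) d))"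
  define DR where "DR = (\<lambda>u d. inv (ER u d))"
  define OI where "OI = (UNIV \<times> (ICset \<times> UNIV) :: ('n word \<times> ('n word \<Rightarrow> 'n blk \<Rightarrow> 'n blk) \<times> ('n word \<Rightarrow> 'n word)) set)"
  define FI where "FI = (\<lambda>u :: 'n word \<times> ('n word \<Rightarrow> 'n blk \<Rightarrow> 'n blk) \<times> ('n word \<Rightarrow> 'n word). snd (snd u))"
  define EI where "EI = (\<lambda>(u :: 'n word \<times> ('n word \<Rightarrow> 'n blk \<Rightarrow> 'n blk) \<times> ('n word \<Rightarrow> 'n word)) d. fst (snd u) (xor (fst u) d))"
  define DI where "DI = (\<lambda>u d. inv (EI u d))"
  define N where "N = real CARD('n word)"
  define cF where "cF = real CARD('n word \<Rightarrow> 'n word)"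
  define cI where "cI = real (card (ICset :: ('n word \<Rightarrow> 'n blk \<Rightarrow> 'n blk) set))"
  have N0: "0 < N" unfolding N_def by simp
  have cF0: "0 < cF" unfolding cF_def by simp
  have cI0: "0 < cI" unfolding cI_def using ICset_ne by (simp add: card_gt_0_iff) blast
  have cOR: "real (card OR) = N * cF" unfolding OR_def N_def cF_def by (simp add: card_UNIV_pair)
  have cOI: "real (card OI) = N * (cI * cF)" unfolding OI_def N_def cF_def cI_def card_OI by simp
  have eps0: "0 \<le> eps" unfolding eps_def by simp
  have bijR: "bij (ER u d) \<and> DR u d = inv (ER u d)" for u d unfolding ER_def DR_def by (simp add: bij_KAF)
  have bijI: "bij (EI u d) \<and> DI u d = inv (EI u d)" if "u \<in> OI" for u d
    using that unfolding OI_def EI_def DI_def ICset_def by auto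
  have hyp: "(1 - eps) * real (card {u\<in>OI. consO (FI u) (EI u) s \<and> fst u = k}) / real (card OI)
        \<le> real (card {u\<in>OR. consO (FR u) (ER u) s \<and> fst u = k}) / real (card OR)"
    if cf: "card (fst s) \<le> qf" and ce: "card (snd s) \<le> qe" and gd: "good s k" for s k
  proof -
    obtain FP T where s: "s = (FP, T)" by (cases s)
    define cC where "cC = real (card (Cset (shiftT k T)))"
    define cB where "cB = real (card (Base FP))"
    define cR where "cR = real (card {F. consO F (\<lambda>d. KAF F (xor k d)) (FP, T)})"
    have eR: "{u\<in>OR. consO (FR u) (ER u) s \<and> fst u = k} = (\<lambda>F. (k, F)) ` {F. consO F (\<lambda>d. KAF F (xor k d)) (FP, T)}"
      unfolding OR_def FR_def ER_def s by auto
    have cRe: "real (card {u\<in>OR. consO (FR u) (ER u) s \<and> fst u = k}) = cR"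
      unfolding eR cR_def by (subst card_image) (auto simp: inj_on_def)
    have eI: "{u\<in>OI. consO (FI u) (EI u) s \<and> fst u = k} = (\<lambda>p. (k, p)) ` (Cset (shiftT k T) \<times> Base FP)"
    proof (intro set_eqI iffI)
      fix u assume u: "u \<in> {u\<in>OI. consO (FI u) (EI u) s \<and> fst u = k}"
      obtain k' IC F where uu: "u = (k', IC, F)" by (cases u) auto
      have "k' = k" "IC \<in> ICset" "consO F (\<lambda>d. IC (xor k d)) (FP, T)" using u unfolding uu OI_def FI_def EI_def s by auto
      then show "u \<in> (\<lambda>p. (k, p)) ` (Cset (shiftT k T) \<times> Base FP)"
        unfolding uu consO_def Cset_def shiftT_def Base_def by auto
    next
      fix u assume "u \<in> (\<lambda>p. (k, p)) ` (Cset (shiftT k T) \<times> Base FP)"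
      then obtain IC F where uu: "u = (k, IC, F)" and IC: "IC \<in> Cset (shiftT k T)" and F: "F \<in> Base FP" by auto
      have "IC \<in> ICset" "\<forall>t\<in>T. IC (xor k (fst t)) (fst (snd t)) = snd (snd t)"
        using IC unfolding Cset_def shiftT_def by auto
      then show "u \<in> {u\<in>OI. consO (FI u) (EI u) s \<and> fst u = k}"
        using F unfolding uu OI_def FI_def EI_def s consO_def Base_def by auto
    qed
    have cIe: "real (card {u\<in>OI. consO (FI u) (EI u) s \<and> fst u = k}) = cC * cB"
      unfolding eI cC_def cB_def by (subst card_image) (auto simp: inj_on_def card_cartesian_product)
    have rl: "(1 - eps) * cC * cB \<le> cI * cR"
      unfolding cC_def cB_def cI_def cR_def eps_def using real_leaf[of FP T k qf qe] gd cf ce s by simp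
    have "(1 - eps) * (cC * cB) / (N * (cI * cF)) = ((1 - eps) * cC * cB / cI) / (N * cF)"
      by (simp add: field_simps)
    also have "\<dots> \<le> cR / (N * cF)"
    proof (rule divide_right_mono)
      show "(1 - eps) * cC * cB / cI \<le> cR" using rl cI0 by (simp add: divide_le_eq mult.commute)
    qed (use N0 cF0 in simp)
    finally show ?thesis unfolding cRe cIe cOR cOI .
  qed
  note H = H_lemma[where OR=OR and OI=OI and FR=FR and ER=ER and DR=DR and FI=FI and EI=EI and DI=DI
      and keyR=fst and keyI=fst and good=good and eps=eps and qf=qf and qe=qe]
  have Hc: "SS OI FI EI DI (\<lambda>u s b. if b then 1 else 0) A ({},{}) / real (card OI)
    - SS OR FR ER DR (\<lambda>u s b. if b then 1 else 0) A ({},{}) / real (card OR)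
    \<le> eps * (SS OI FI EI DI (\<lambda>u s b. 1) A ({},{}) / real (card OI))
      + SS OI FI EI DI (\<lambda>u s b. if good s (fst u) then 0 else 1) A ({},{}) / real (card OI)"
    by (rule H) (use bijR bijI eps0 hyp bA in \<open>auto simp: OR_def OI_def\<close>)
  have e1: "SS OI FI EI DI (\<lambda>u s b. if b then 1 else 0) A ({},{}) / real (card OI) = pmf (ideal_world A) True"
  proof -
    have "SS OI FI EI DI (\<lambda>u s b. if b then 1 else 0) A ({},{}) = (\<Sum>u\<in>OI. PIr A u)"
      unfolding SS_empty PIr_def FI_def EI_def DI_def by (simp add: pmf_run_evl[symmetric])
    then show ?thesis unfolding pmf_ideal_sum OI_def sum_OI cOI[unfolded OI_def] N_def cI_def cF_def by simp
  qed
  have e2: "SS OR FR ER DR (\<lambda>u s b. if b then 1 else 0) A ({},{}) / real (card OR) = pmf (real_world w0 w1 w2 w3 [g1, g2, g3, g4] A) True"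
  proof -
    have "SS OR FR ER DR (\<lambda>u s b. if b then 1 else 0) A ({},{}) = (\<Sum>u\<in>OR. PRr A u)"
      unfolding SS_empty PRr_def FR_def ER_def DR_def by (simp add: pmf_run_evl[symmetric])
    then show ?thesis unfolding pmf_real_sum OR_def by simp
  qed
  have e3: "SS OI FI EI DI (\<lambda>u s b. 1) A ({},{}) / real (card OI) = 1"
  proof -
    have "SS OI FI EI DI (\<lambda>u s b. 1) A ({},{}) = real (card OI)"
      unfolding SS_empty by (simp add: evl_one)
    then show ?thesis using cOI N0 cI0 cF0 by simp
  qed
  have e4: "SS OI FI EI DI (\<lambda>u s b. if good s (fst u) then 0 else 1) A ({},{}) \<le> \<beta> * real (card OI)"
  proof -
    define bk where "bk k = (\<lambda>s (b::bool). if good s k then 0 else (1::real))" for k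
    have "SS OI FI EI DI (\<lambda>u s b. if good s (fst u) then 0 else 1) A ({},{})
        = (\<Sum>k\<in>UNIV. \<Sum>IC\<in>ICset. \<Sum>F\<in>UNIV. evl (bk k) A ({},{}) F (\<lambda>d. IC (xor k d)) (\<lambda>d. inv (IC (xor k d))))"
      unfolding SS_empty OI_def sum_OI FI_def EI_def DI_def bk_def by simp
    also have "\<dots> = (\<Sum>k\<in>UNIV. \<Sum>IC\<in>ICset. \<Sum>F\<in>UNIV. evl (bk k) A ({},{}) F IC (\<lambda>d. inv (IC d)))"
    proof (rule sum.cong[OF refl])
      fix k
      show "(\<Sum>IC\<in>ICset. \<Sum>F\<in>UNIV. evl (bk k) A ({},{}) F (\<lambda>d. IC (xor k d)) (\<lambda>d. inv (IC (xor k d))))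
          = (\<Sum>IC\<in>ICset. \<Sum>F\<in>UNIV. evl (bk k) A ({},{}) F IC (\<lambda>d. inv (IC d)))"
        using sum.reindex_bij_betw[OF bij_shift_IC[of k], of "\<lambda>IC'. \<Sum>F\<in>UNIV. evl (bk k) A ({},{}) F IC' (\<lambda>d. inv (IC' d))"]
        by simp
    qed
    also have "\<dots> = (\<Sum>IC\<in>ICset. \<Sum>k\<in>UNIV. \<Sum>F\<in>UNIV. evl (bk k) A ({},{}) F IC (\<lambda>d. inv (IC d)))"
      by (rule sum.swap)
    also have "\<dots> = (\<Sum>IC\<in>ICset. \<Sum>F\<in>UNIV. \<Sum>k\<in>UNIV. evl (bk k) A ({},{}) F IC (\<lambda>d. inv (IC d)))"
      by (intro sum.cong refl) (rule sum.swap)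
    also have "\<dots> \<le> (\<Sum>IC\<in>(ICset :: ('n word \<Rightarrow> 'n blk \<Rightarrow> 'n blk) set). \<Sum>F\<in>(UNIV :: ('n word \<Rightarrow> 'n word) set). N * \<beta>)"
    proof (intro sum_mono)
      fix IC :: "'n word \<Rightarrow> 'n blk \<Rightarrow> 'n blk" and F :: "'n word \<Rightarrow> 'n word"
      show "(\<Sum>k\<in>UNIV. evl (bk k) A ({},{}) F IC (\<lambda>d. inv (IC d))) \<le> N * \<beta>"
        unfolding bk_def N_def \<beta>_def by (rule KBrun[OF gk bA]) auto
    qed
    also have "\<dots> = \<beta> * real (card OI)" unfolding cOI cI_def cF_def by simp
    finally show ?thesis .
  qed
  have "pmf (ideal_world A) True - pmf (real_world w0 w1 w2 w3 [g1, g2, g3, g4] A) True \<le> eps + \<beta>"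
  proof -
    have "SS OI FI EI DI (\<lambda>u s b. if good s (fst u) then 0 else 1) A ({},{}) / real (card OI) \<le> \<beta>"
      using e4 cOI N0 cI0 cF0 by (simp add: divide_le_eq)
    then show ?thesis using Hc unfolding e1 e2 e3 by simp
  qed
  then show ?thesis unfolding eps_def \<beta>_def .
qed

end


context KS
begin

lemma real_negd:
  fixes A :: "('n word, 'n blk) dist"
  shows "pmf (real_world w0 w1 w2 w3 [g1, g2, g3, g4] (negd A)) True = 1 - pmf (real_world w0 w1 w2 w3 [g1, g2, g3, g4] A) True"
proof -
  have "(\<Sum>u\<in>UNIV. PRr (negd A) u) = (\<Sum>u\<in>UNIV. 1 - PRr A u)"
    unfolding PRr_def by (simp add: pmf_run_negd)
  also have "\<dots> = real (card (UNIV :: ('n word \<times> ('n word \<Rightarrow> 'n word)) set)) - (\<Sum>u\<in>UNIV. PRr A u)"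
    by (simp add: sum_subtractf)
  finally show ?thesis unfolding pmf_real_sum by (simp add: diff_divide_distrib)
qed

lemma ideal_negd:
  fixes A :: "('n word, 'n blk) dist"
  shows "pmf (ideal_world (negd A)) True = 1 - pmf (ideal_world A) True"
proof -
  have c: "(\<Sum>k\<in>(UNIV :: 'n word set). \<Sum>IC\<in>(ICset :: ('n word \<Rightarrow> 'n blk \<Rightarrow> 'n blk) set). \<Sum>F\<in>(UNIV :: ('n word \<Rightarrow> 'n word) set). (1::real))
     = real CARD('n word) * (real (card (ICset :: ('n word \<Rightarrow> 'n blk \<Rightarrow> 'n blk) set)) * real CARD('n word \<Rightarrow> 'n word))"
    by simp
  have pos: "0 < real CARD('n word) * (real (card (ICset :: ('n word \<Rightarrow> 'n blk \<Rightarrow> 'n blk) set)) * real CARD('n word \<Rightarrow> 'n word))"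
  proof -
    have "0 < card (ICset :: ('n word \<Rightarrow> 'n blk \<Rightarrow> 'n blk) set)"
      by (rule card_gt_0_iff[THEN iffD2]) (use ICset_ne in auto)
    then show ?thesis by simp
  qed
  have "(\<Sum>k\<in>UNIV. \<Sum>IC\<in>ICset. \<Sum>F\<in>UNIV. PIr (negd A) (k,IC,F)) = (\<Sum>k\<in>UNIV. \<Sum>IC\<in>ICset. \<Sum>F\<in>UNIV. 1 - PIr A (k,IC,F))"
    unfolding PIr_def by (simp add: pmf_run_negd)
  also have "\<dots> = (\<Sum>k\<in>(UNIV :: 'n word set). \<Sum>IC\<in>(ICset :: ('n word \<Rightarrow> 'n blk \<Rightarrow> 'n blk) set). \<Sum>F\<in>(UNIV :: ('n word \<Rightarrow> 'n word) set). (1::real))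
     - (\<Sum>k\<in>UNIV. \<Sum>IC\<in>ICset. \<Sum>F\<in>UNIV. PIr A (k,IC,F))"
    by (simp only: sum_subtractf)
  finally show ?thesis unfolding pmf_ideal_sum c using pos ICset_ne by (simp add: diff_divide_distrib) blast
qed

end

theorem theorem2:
  fixes w0 w1 w2 w3 g1 g2 g3 g4 :: "'n::len word \<Rightarrow> 'n word"
    and \<delta>1 \<delta>2 \<delta>3 :: real and qf qe :: nat
  assumes "good_ks w1 w2 g1 g4 \<delta>1 \<delta>2 \<delta>3"
  shows "adv_rka w0 w1 w2 w3 [g1, g2, g3, g4] qf qe
           \<le> 2 * \<delta>1 * real qe * real qf + (\<delta>2 + \<delta>3) * real qe ^ 2
             + (2 * real qe * real qf + 7 * real qe ^ 2) / 2 ^ LENGTH('n)"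
proof -
  interpret KS w0 w1 w2 w3 g1 g2 g3 g4 .
  define B where "B = 2 * \<delta>1 * real qe * real qf + (\<delta>2 + \<delta>3) * real qe ^ 2
             + (2 * real qe * real qf + 7 * real qe ^ 2) / 2 ^ LENGTH('n)"
  have eqB: "(2 * real qe * real qf + 7 * real qe ^ 2) / real CARD('n word)
      + (2 * \<delta>1 * real qe * real qf + (\<delta>2 + \<delta>3) * real qe ^ 2) = B"
    unfolding B_def by (simp add: card_word)
  have bnd: "\<bar>pmf (real_world w0 w1 w2 w3 [g1, g2, g3, g4] A) True - pmf (ideal_world A) True\<bar> \<le> B"
    if bA: "bounded A qf qe" for A :: "('n word, 'n word \<times> 'n word) dist"
  proof -
    have h1: "pmf (ideal_world A) True - pmf (real_world w0 w1 w2 w3 [g1, g2, g3, g4] A) True \<le> B"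
      using main_bound[OF assms bA] unfolding eqB .
    have bN: "bounded (negd A) qf qe" using bA by (simp add: bounded_negd)
    have h2: "pmf (ideal_world (negd A)) True - pmf (real_world w0 w1 w2 w3 [g1, g2, g3, g4] (negd A)) True \<le> B"
      using main_bound[OF assms bN] unfolding eqB .
    then have "pmf (real_world w0 w1 w2 w3 [g1, g2, g3, g4] A) True - pmf (ideal_world A) True \<le> B"
      unfolding real_negd ideal_negd by simp
    with h1 show ?thesis by (simp add: abs_le_iff)
  qed
  have ne: "{A :: ('n word, 'n word \<times> 'n word) dist. bounded A qf qe} \<noteq> {}"
  proof -
    have "Out True \<in> {A :: ('n word, 'n word \<times> 'n word) dist. bounded A qf qe}" by simp
    then show ?thesis by blast
  qed
  show ?thesis unfolding adv_rka_def B_def[symmetric]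
    by (rule cSUP_least[OF ne]) (use bnd in auto)
qed


end
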